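(* Let $\Omega$, $T_0>0$, $T_w$, $r_\perp,r_\parallel$ be as in the context and assume $\sup_{x\in\partial\Omega}|T_w(x)-T_0|<\delta_0$ and $\max\{|1-r_\perp|,|1-r_\parallel|\}<\delta_0$ with $\delta_0>0$ sufficiently small. For $x_1\in\partial\Omega$ and $v\in\mathbb{R}^3$ set $$\mathcal{A}:=\frac{2}{r_\perp r_\parallel(2-r_\parallel)\pi}\frac{1}{(2T_w(x_1))^2}e^{[\frac{1}{4T_0}-\frac{1}{2T_w(x_1)}]|v|^2},$$ and for $v_1\in\mathbb{R}^3$ with $n(x_1)\cdot v_1>0$, $$\mathcal{B}(v_1):=e^{-[\frac{1}{4T_0}-\frac{1}{2T_w(x_1)}]|v_1|^2}(n(x_1)\cdot v_1)\,I_0\Big(\frac{(1-r_\perp)^{1/2}v_{1,\perp}v_\perp}{r_\perp T_w(x_1)}\Big)\exp\Big(-\frac{1}{2T_w(x_1)}\Big[\frac{|v_{1,\perp}|^2+(1-r_\perp)|v_\perp|^2}{r_\perp}+\frac{|v_{1,\parallel}-(1-r_\parallel)v_\parallel|^2}{r_\parallel(2-r_\parallel)}\Big]\Big).$$ Then, uniformly in $x_1\in\partial\Omega$ and $v\in\mathbb{R}^3$, $$\mathcal{A}\int_{n(x_1)\cdot v_1>0}[1+|v_1|^2+|v|^2]\,\mathcal{B}(v_1)\,dv_1\lesssim1,\qquad \mathcal{A}\int_{n(x_1)\cdot v_1>0}\frac{\mathcal{B}(v_1)}{\alpha(x_1,v_1)}\,dv_1\lesssim1,$$ $$\mathcal{A}\int_{n(x_1)\cdot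 v_1>0}[1+|v_1|]\,|\nabla_{v_1}\mathcal{B}(v_1)|\,dv_1\lesssim1,$$ and, writing $x_1=\eta_{p^1}(\mathbf{x}^1_{p^1})$ in a boundary chart, for $i=1,2$, $$\big|\partial_{\mathbf{x}^1_{p^1,i}}\mathcal{A}\big|\int_{n(x_1)\cdot v_1>0}\mathcal{B}(v_1)\,dv_1\lesssim1.$$
   Context: $\Omega=\{\xi<0\}\subset\mathbb{R}^3$ bounded, $\xi\in C^2$, strictly convex ($\sum\zeta_i\zeta_j\partial_{ij}\xi\gtrsim|\zeta|^2$), $\nabla\xi\ne0$ near $\partial\Omega$; $n(x)$ outward normal. $T_w:\partial\Omega\to(0,\infty)$ is the wall temperature (of class $C^1$ along the boundary), $r_\perp,r_\parallel$ accommodation coefficients. For $x_1\in\partial\Omega$: $v_\perp=v\cdot n(x_1)$, $v_\parallel=v-v_\perp n(x_1)$, and likewise $v_{1,\perp},v_{1,\parallel}$. $I_0(y)=\pi^{-1}\int_0^\pi e^{y\cos\phi}d\phi$. Kinetic distance $\alpha(x,v)=\chi_\varepsilon(\sqrt{|v\cdot\nabla\xi(x)|^2-2\xi(x)(v\cdot\nabla^2\xi(x)\cdot v)})$ with fixed small $\varepsilon>0$ and $\chi_a$ nondecreasing smooth, $\chi_a(s)=s$ on $[0,a]$, $\chi_a(s)=2a$ on $[4a,\infty)$, $|\chi_a'|\le1$. Boundary charts: for $p$ in a finite set $\mathcal{P}\subset\partial\Omega$, $\eta_p:B_+(0;\delta_1)\to\bar\Omega$ is a $C^2$ one-to-one parametrization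 of a neighborhood of $p$ with $\eta_p(\mathbf{x}_p)\in\partial\Omega$ iff $\mathbf{x}_{p,3}=0$, and $\partial_{\mathbf{x}_{p,i}}\eta_p$ mutually orthogonal at $\mathbf{x}_{p,3}=0$; boundary points are written $x_1=\eta_{p^1}(\mathbf{x}^1_{p^1,1},\mathbf{x}^1_{p^1,2},0)$, and $\partial_{\mathbf{x}^1_{p^1,i}}\mathcal{A}$ is the derivative of $\mathcal{A}$ (through $T_w(x_1)$) with respect to that coordinate. The implicit constants in $\lesssim$ may depend on $T_0$, $\Omega$ and $T_w$ but not on $x_1,v$. *)

theory Defs
  imports "HOL-Analysis.Analysis"
begin

definition I0 :: "real \<Rightarrow> real" where
  "I0 y = (1 / pi) * integral {0..pi} (\<lambda>\<phi>. exp (y * cos \<phi>))"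

definition C1_on :: "'a::real_normed_vector set \<Rightarrow> ('a \<Rightarrow> 'b::real_normed_vector) \<Rightarrow> bool" where
  "C1_on S f \<longleftrightarrow> (\<exists>f'. (\<forall>x\<in>S. (f has_derivative blinfun_apply (f' x)) (at x)) \<and> continuous_on S f')"

definition C2_on :: "'a::real_normed_vector set \<Rightarrow> ('a \<Rightarrow> 'b::real_normed_vector) \<Rightarrow> bool" where
  "C2_on S f \<longleftrightarrow> (\<exists>f'. (\<forall>x\<in>S. (f has_derivative blinfun_apply (f' x)) (at x)) \<and> C1_on S f')"

definition half_ball :: "real \<Rightarrow> (real^3) set" where
  "half_ball d = {x. norm x < d \<and> x$3 \<ge> 0}"

definition half_cball :: "real \<Rightarrow> (real^3) set" where
  "half_cball d = {x. norm x \<le> d \<and> x$3 \<ge> 0}"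

definition nrm :: "(real^3 \<Rightarrow> real^3) \<Rightarrow> real^3 \<Rightarrow> real^3" where
  "nrm gxi x = (1 / norm (gxi x)) *\<^sub>R gxi x"

text \<open>The coefficient A; tw stands for T_w(x_1).\<close>
definition Acoef :: "real \<Rightarrow> real \<Rightarrow> real \<Rightarrow> real \<Rightarrow> real^3 \<Rightarrow> real" where
  "Acoef T0 rperp rpar tw v =
     2 / (rperp * rpar * (2 - rpar) * pi) * (1 / (2 * tw)^2)
     * exp ((1 / (4 * T0) - 1 / (2 * tw)) * (norm v)^2)"

text \<open>The function B(v_1); n is the normal n(x_1), tw stands for T_w(x_1).\<close>
definition Bfun :: "real \<Rightarrow> real \<Rightarrow> real \<Rightarrow> real \<Rightarrow> real^3 \<Rightarrow> real^3 \<Rightarrow> real^3 \<Rightarrow> real" where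
  "Bfun T0 rperp rpar tw n v v1 =
     (let vperp = v \<bullet> n; vpar = v - vperp *\<^sub>R n;
          v1perp = v1 \<bullet> n; v1par = v1 - v1perp *\<^sub>R n
      in exp (- (1 / (4 * T0) - 1 / (2 * tw)) * (norm v1)^2) * (n \<bullet> v1)
         * I0 (sqrt (1 - rperp) * v1perp * vperp / (rperp * tw))
         * exp (- (1 / (2 * tw)) *
              (((\<bar>v1perp\<bar>)^2 + (1 - rperp) * (\<bar>vperp\<bar>)^2) / rperp
               + (norm (v1par - (1 - rpar) *\<^sub>R vpar))^2 / (rpar * (2 - rpar)))))"

text \<open>Kinetic distance alpha(x,v); gxi = grad xi, hxi = Hessian of xi.\<close>
definition kin_alpha :: "(real \<Rightarrow> real) \<Rightarrow> (real^3 \<Rightarrow> real) \<Rightarrow> (real^3 \<Rightarrow> real^3)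
    \<Rightarrow> (real^3 \<Rightarrow> real^3^3) \<Rightarrow> real^3 \<Rightarrow> real^3 \<Rightarrow> real" where
  "kin_alpha chi xi gxi hxi x v =
     chi (sqrt ((\<bar>v \<bullet> gxi x\<bar>)^2 - 2 * xi x * (v \<bullet> (hxi x *v v))))"

end

theory Submission
  imports Defs "HOL-Probability.Distributions"
begin


lemma gauss_finite:
  fixes k :: real assumes k: "k > 0"
  shows "(\<integral>\<^sup>+ v. ennreal (exp (- k * (norm (v::'a::euclidean_space))^2)) \<partial>lborel)
         = ennreal ((sqrt (pi / k)) ^ DIM('a))"
proof -
  define \<sigma> where "\<sigma> = sqrt (1 / (2*k))"
  have s2: "2 * \<sigma>^2 = 1/k" using k by (simp add: \<sigma>_def)
  have spos: "\<sigma> > 0" using k by (simp add: \<sigma>_def)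
  define c where "c = 1 / sqrt (2 * pi * \<sigma>\<^sup>2)"
  have cpos: "c > 0" using spos by (simp add: c_def)
  have "2 * pi * \<sigma>^2 = pi / k" using s2 k by (simp add: field_simps)
  then have c_eq: "1 / c = sqrt (pi / k)" unfolding c_def by simp
  have nd: "exp (- k * t^2) = normal_density 0 \<sigma> t / c" for t
  proof -
    have e: "( - ((t - 0)^2) / (2*\<sigma>^2)) = - k*t^2" using s2 by simp
    show ?thesis using cpos unfolding normal_density_def c_def[symmetric] e by simp
  qed
  have one: "(\<integral>\<^sup>+ t. ennreal (exp (- k * t^2)) \<partial>lborel) = ennreal (sqrt (pi / k))"
  proof -
    have "(\<integral>\<^sup>+ t. ennreal (exp (- k * t^2)) \<partial>lborel) = (\<integral>\<^sup>+ t. ennreal (1/c) * ennreal (normal_density 0 \<sigma> t) \<partial>lborel)"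
      using cpos by (intro nn_integral_cong, subst nd) (simp add: ennreal_mult[symmetric])
    also have "\<dots> = ennreal (1/c) * (\<integral>\<^sup>+ t. ennreal (normal_density 0 \<sigma> t) \<partial>lborel)"
      by (rule nn_integral_cmult) measurable
    also have "(\<integral>\<^sup>+ t. ennreal (normal_density 0 \<sigma> t) \<partial>lborel) = 1"
      using spos by (subst nn_integral_eq_integral) (auto simp: integrable_normal_density integral_normal_density)
    finally show ?thesis using c_eq by simp
  qed
  have prod: "ennreal (exp (- k * (norm v)^2)) = (\<Prod>b\<in>Basis. ennreal (exp (- k * (v \<bullet> b)^2)))" for v :: 'a
  proof -
    have "(norm v)^2 = v \<bullet> v" by (simp add: power2_norm_eq_inner)
    also have "\<dots> = (\<Sum>b\<in>Basis. (v \<bullet> b) * (v \<bullet> b))" by (rule euclidean_inner)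
    also have "\<dots> = (\<Sum>b\<in>Basis. (v \<bullet> b)^2)" by (simp add: power2_eq_square)
    finally have "(norm v)^2 = (\<Sum>b\<in>Basis. (v \<bullet> b)^2)" .
    then have "exp (- k * (norm v)^2) = (\<Prod>b\<in>Basis. exp (- k * (v \<bullet> b)^2))"
      by (simp add: sum_distrib_left exp_sum[symmetric] sum_negf)
    then show ?thesis by (simp add: prod_ennreal)
  qed
  have "(\<integral>\<^sup>+ v. ennreal (exp (- k * (norm (v::'a))^2)) \<partial>lborel)
      = (\<integral>\<^sup>+ v. (\<Prod>b\<in>Basis. (\<lambda>b t. ennreal (exp (- k * t^2))) b ((v::'a) \<bullet> b)) \<partial>lborel)"
    by (rule nn_integral_cong) (simp only: prod)
  also have "\<dots> = (\<Prod>b\<in>(Basis::'a set). (\<integral>\<^sup>+ t. ennreal (exp (- k * t^2)) \<partial>lborel))"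
    by (rule nn_integral_lborel_prod) auto
  also have "\<dots> = ennreal ((sqrt (pi / k)) ^ DIM('a))"
    using k by (simp only: one prod_constant) (simp add: ennreal_power)
  finally show ?thesis .
qed

lemma int_bound:
  fixes f :: "'a::euclidean_space \<Rightarrow> real"
  assumes A: "0 < A" and K: "0 \<le> K" and k: "k > 0"
    and bd: "\<And>v1. v1 \<in> S \<Longrightarrow> A * f v1 \<le> K * exp (- k * (norm v1)^2)"
  shows "ennreal A * (\<integral>\<^sup>+ v1. ennreal (f v1) * indicator S v1 \<partial>lborel) \<le> ennreal (K * (sqrt (pi / k)) ^ DIM('a))"
proof -
  have "(\<integral>\<^sup>+ v1. ennreal (f v1) * indicator S v1 \<partial>lborel)
     \<le> (\<integral>\<^sup>+ v1. ennreal (K / A) * ennreal (exp (- k * (norm (v1::'a))^2)) \<partial>lborel)"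
  proof (rule nn_integral_mono)
    fix v1 :: 'a
    show "ennreal (f v1) * indicator S v1 \<le> ennreal (K / A) * ennreal (exp (- k * (norm v1)^2))"
    proof (cases "v1 \<in> S")
      case True
      then have "f v1 \<le> K / A * exp (- k * (norm v1)^2)" using bd[OF True] A
        by (simp add: field_simps)
      then show ?thesis using True A K by (simp add: ennreal_mult[symmetric] ennreal_leI)
    qed simp
  qed
  also have "\<dots> = ennreal (K / A) * ennreal ((sqrt (pi / k)) ^ DIM('a))"
    using gauss_finite[OF k, where 'a='a] by (subst nn_integral_cmult) auto
  finally have "ennreal A * (\<integral>\<^sup>+ v1. ennreal (f v1) * indicator S v1 \<partial>lborel)
     \<le> ennreal A * (ennreal (K / A) * ennreal ((sqrt (pi / k)) ^ DIM('a)))"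
    by (rule mult_left_mono) simp
  also have "\<dots> = ennreal (K * (sqrt (pi / k)) ^ DIM('a))"
  proof -
    have "ennreal A * ennreal (K / A) = ennreal K" using A K by (simp add: ennreal_mult[symmetric])
    then show ?thesis using K k by (simp add: mult.assoc[symmetric]) (subst ennreal_mult, auto)
  qed
  finally show ?thesis .
qed


lemma expo_bound:
  fixes T0 tw rperp rpar x y U Wp N :: real
  assumes T0: "T0 > 0" and tw: "\<bar>tw - T0\<bar> < T0/10"
    and rp: "0 < rperp" "rperp \<le> 1" "\<bar>1 - rperp\<bar> < 1/100"
    and rq: "0 < rpar" "rpar < 2" "\<bar>1 - rpar\<bar> < 1/100"
    and U: "U \<ge> 0" and Wp: "Wp \<ge> 0" and N: "N \<ge> 0" "N \<ge> (1 - \<bar>1 - rpar\<bar>) * Wp - \<bar>1 - rpar\<bar> * U"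
  shows "(1/(4*T0) - 1/(2*tw)) * (y^2 + U) - (1/(4*T0) - 1/(2*tw)) * (x^2 + Wp)
        + \<bar>sqrt (1 - rperp) * x * y / (rperp * tw)\<bar>
        - (1/(2*tw)) * ((x^2 + (1 - rperp) * y^2) / rperp + N / (rpar * (2 - rpar)))
       \<le> - (1/(10*T0)) * (x^2 + y^2 + U + Wp)"
proof -
  define b where "b = 1/(2*tw)"
  define p where "p = 1/T0"
  have twb: "tw > 9*T0/10" "tw < 11*T0/10" using tw by linarith+
  have twpos: "tw > 0" using twb T0 by linarith
  have pb1: "5*p/11 < b" unfolding b_def p_def using twb T0 twpos by (simp add: field_simps)
  have pb2: "b < 5*p/9" unfolding b_def p_def using twb T0 twpos by (simp add: field_simps)
  have bpos: "b > 0" using twpos by (simp add: b_def)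
  have ppos: "p > 0" using T0 by (simp add: p_def)
  have e1: "1/(4*T0) = p/4" "1/(10*T0) = p/10" by (simp_all add: p_def)
  have s: "sqrt (1 - rperp) \<le> 1/10"
  proof -
    have "1 - rperp \<le> (1/10)^2" using rp by (simp add: power2_eq_square)
    then have "sqrt (1 - rperp) \<le> sqrt ((1/10)^2)" by (rule real_sqrt_le_mono)
    then show ?thesis by simp
  qed
  have zeq: "\<bar>sqrt (1 - rperp) * x * y / (rperp * tw)\<bar> = 2 * b * (sqrt (1 - rperp) / rperp) * (\<bar>x\<bar> * \<bar>y\<bar>)"
    using rp twpos by (simp add: b_def abs_mult field_simps)
  have sr: "sqrt (1 - rperp) / rperp \<le> 1/9"
  proof -
    have "sqrt (1 - rperp) \<le> rperp / 9" using s rp by linarith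
    then show ?thesis using rp by (simp add: field_simps)
  qed
  have xy: "2 * (\<bar>x\<bar> * \<bar>y\<bar>) \<le> x^2 + y^2"
    using sum_squares_bound[of "\<bar>x\<bar>" "\<bar>y\<bar>"] by (simp add: power2_eq_square algebra_simps)
  have z: "\<bar>sqrt (1 - rperp) * x * y / (rperp * tw)\<bar> \<le> b/9 * x^2 + b/9 * y^2"
  proof -
    have "2 * b * (sqrt (1 - rperp) / rperp) * (\<bar>x\<bar> * \<bar>y\<bar>) \<le> 2 * b * (1/9) * (\<bar>x\<bar> * \<bar>y\<bar>)"
      using sr bpos by (intro mult_right_mono mult_left_mono) auto
    also have "\<dots> = (b/9) * (2 * (\<bar>x\<bar> * \<bar>y\<bar>))" by simp
    also have "\<dots> \<le> (b/9) * (x^2 + y^2)" using xy bpos by (intro mult_left_mono) auto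
    finally show ?thesis using zeq by (simp add: algebra_simps)
  qed
  have q1: "(x^2 + (1 - rperp) * y^2) / rperp \<ge> x^2"
  proof -
    have "x^2 \<le> x^2 + (1 - rperp) * y^2" using rp by simp
    also have "\<dots> \<le> (x^2 + (1 - rperp) * y^2) / rperp" using rp
      by (simp add: le_divide_eq mult_left_le)
    finally show ?thesis .
  qed
  have q2: "N / (rpar * (2 - rpar)) \<ge> 99/100 * Wp - 1/100 * U"
  proof -
    have re: "rpar * (2 - rpar) = 1 - (1 - rpar)^2" by (simp add: power2_eq_square algebra_simps)
    have sq: "(1 - rpar)^2 < 1"
    proof -
      have "(1 - rpar)^2 = \<bar>1 - rpar\<bar> * \<bar>1 - rpar\<bar>" by (simp add: power2_eq_square)
      also have "\<dots> \<le> 1 * \<bar>1 - rpar\<bar>" using rq by (intro mult_right_mono) auto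
      finally have "(1 - rpar)^2 \<le> \<bar>1 - rpar\<bar>" by simp
      then show ?thesis using rq by linarith
    qed
    have rr: "0 < rpar * (2 - rpar)" "rpar * (2 - rpar) \<le> 1" using sq re by auto
    have "N \<le> N / (rpar * (2 - rpar))" using rr N by (simp add: le_divide_eq mult_left_le)
    moreover have "(1 - \<bar>1 - rpar\<bar>) * Wp \<ge> 99/100 * Wp" using rq Wp by (intro mult_right_mono) auto
    moreover have "\<bar>1 - rpar\<bar> * U \<le> 1/100 * U" using rq U by (intro mult_right_mono) auto
    ultimately show ?thesis using N by linarith
  qed
  have c1: "(p/4 - 8*b/9) * y^2 \<le> (-p/10) * y^2"
  proof -
    have "(p/4 - 8*b/9) \<le> -p/10" using pb1 ppos by linarith
    then show ?thesis using U Wp by (intro mult_right_mono) auto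
  qed
  have c2: "(p/4 - 99*b/100) * U \<le> (-p/10) * U"
  proof -
    have "(p/4 - 99*b/100) \<le> -p/10" using pb1 ppos by linarith
    then show ?thesis using U Wp by (intro mult_right_mono) auto
  qed
  have c3: "(-p/4 + b/9) * x^2 \<le> (-p/10) * x^2"
  proof -
    have "(-p/4 + b/9) \<le> -p/10" using pb2 ppos by linarith
    then show ?thesis using U Wp by (intro mult_right_mono) auto
  qed
  have c4: "(-p/4 + b/100) * Wp \<le> (-p/10) * Wp"
  proof -
    have "(-p/4 + b/100) \<le> -p/10" using pb2 ppos by linarith
    then show ?thesis using U Wp by (intro mult_right_mono) auto
  qed
  have m1: "b * x^2 \<le> b * ((x^2 + (1 - rperp) * y^2) / rperp)" using q1 bpos by (intro mult_left_mono) auto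
  have m2: "b * (99/100 * Wp - 1/100 * U) \<le> b * (N / (rpar * (2 - rpar)))" using q2 bpos by (intro mult_left_mono) auto
  show ?thesis unfolding e1 b_def[symmetric]
    using z m1 m2 c1 c2 c3 c4 by (simp add: algebra_simps)
qed


definition I1 :: "real \<Rightarrow> real" where
  "I1 y = (1 / pi) * integral {0..pi} (\<lambda>\<phi>. cos \<phi> * exp (y * cos \<phi>))"

lemma I0_deriv: "(I0 has_real_derivative I1 y) (at y)"
proof -
  have "((\<lambda>y. integral (cbox 0 pi) (\<lambda>\<phi>. exp (y * cos \<phi>))) has_field_derivative
        integral (cbox 0 pi) (\<lambda>\<phi>. cos \<phi> * exp (y * cos \<phi>))) (at y within UNIV)"
    by (rule leibniz_rule_field_derivative)
       (auto intro!: derivative_eq_intros integrable_continuous_interval continuous_intros simp: case_prod_beta cbox_interval)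
  then show ?thesis unfolding I0_def[abs_def] I1_def
    by (auto intro!: derivative_eq_intros simp: cbox_interval)
qed

lemma I0_nonneg: "0 \<le> I0 y"
proof -
  have "0 \<le> integral {0..pi} (\<lambda>\<phi>. exp (y * cos \<phi>))"
    by (auto intro!: integral_nonneg integrable_continuous_interval continuous_intros)
  then show ?thesis unfolding I0_def by simp
qed

lemma I0_le: "I0 y \<le> exp \<bar>y\<bar>"
proof -
  have "integral {0..pi} (\<lambda>\<phi>. exp (y * cos \<phi>)) \<le> integral {0..pi} (\<lambda>\<phi>. exp \<bar>y\<bar>)"
  proof (rule integral_le)
    show "(\<lambda>\<phi>. exp (y * cos \<phi>)) integrable_on {0..pi}"
      by (auto intro!: integrable_continuous_interval continuous_intros)
    fix \<phi> :: real
    have "y * cos \<phi> \<le> \<bar>y * cos \<phi>\<bar>" by simp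
    also have "\<dots> \<le> \<bar>y\<bar>" using abs_cos_le_one[of \<phi>] by (simp add: abs_mult mult_left_le)
    finally show "exp (y * cos \<phi>) \<le> exp \<bar>y\<bar>" by simp
  qed auto
  then show ?thesis unfolding I0_def using pi_gt_zero by (simp add: field_simps)
qed

lemma I1_le: "\<bar>I1 y\<bar> \<le> exp \<bar>y\<bar>"
proof -
  have "norm (integral {0..pi} (\<lambda>\<phi>. cos \<phi> * exp (y * cos \<phi>))) \<le> integral {0..pi} (\<lambda>\<phi>. exp \<bar>y\<bar>)"
  proof (rule integral_norm_bound_integral)
    show "(\<lambda>\<phi>. cos \<phi> * exp (y * cos \<phi>)) integrable_on {0..pi}"
      by (auto intro!: integrable_continuous_interval continuous_intros)
    fix \<phi> :: real
    have "y * cos \<phi> \<le> \<bar>y * cos \<phi>\<bar>" by simp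
    also have "\<dots> \<le> \<bar>y\<bar>" using abs_cos_le_one[of \<phi>] by (simp add: abs_mult mult_left_le)
    finally have "exp (y * cos \<phi>) \<le> exp \<bar>y\<bar>" by simp
    then show "norm (cos \<phi> * exp (y * cos \<phi>)) \<le> exp \<bar>y\<bar>"
    proof -
      have "\<bar>cos \<phi>\<bar> * exp (y * cos \<phi>) \<le> 1 * exp \<bar>y\<bar>"
        using abs_cos_le_one[of \<phi>] \<open>exp (y * cos \<phi>) \<le> exp \<bar>y\<bar>\<close>
        by (intro mult_mono) auto
      then show ?thesis by (simp add: abs_mult)
    qed
  qed auto
  then show ?thesis unfolding I1_def using pi_gt_zero by (simp add: field_simps abs_mult)
qed


lemma I0_comp_deriv:
  assumes "(f has_derivative f') (at x)"
  shows "((\<lambda>x. I0 (f x)) has_derivative (\<lambda>h. f' h * I1 (f x))) (at x)"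
  using DERIV_compose_FDERIV[OF I0_deriv assms] .

definition Gm :: "real \<Rightarrow> real \<Rightarrow> real \<Rightarrow> real \<Rightarrow> real^3 \<Rightarrow> real^3 \<Rightarrow> real^3 \<Rightarrow> real" where
  "Gm T0 rperp rpar tw n v v1 =
     exp (- (1 / (4 * T0) - 1 / (2 * tw)) * (v1 \<bullet> v1))
   * exp (- (1 / (2 * tw)) * (((v1 \<bullet> n)^2 + (1 - rperp) * (v \<bullet> n)^2) / rperp
       + ((v1 - (v1 \<bullet> n) *\<^sub>R n - (1 - rpar) *\<^sub>R (v - (v \<bullet> n) *\<^sub>R n)) \<bullet> (v1 - (v1 \<bullet> n) *\<^sub>R n - (1 - rpar) *\<^sub>R (v - (v \<bullet> n) *\<^sub>R n))) / (rpar * (2 - rpar))))"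

definition zarg :: "real \<Rightarrow> real \<Rightarrow> real^3 \<Rightarrow> real^3 \<Rightarrow> real^3 \<Rightarrow> real" where
  "zarg rperp tw n v v1 = sqrt (1 - rperp) * (v1 \<bullet> n) * (v \<bullet> n) / (rperp * tw)"

lemma Bfun_eq: "Bfun T0 rperp rpar tw n v v1 = Gm T0 rperp rpar tw n v v1 * (n \<bullet> v1) * I0 (zarg rperp tw n v v1)"
  unfolding Bfun_def Gm_def zarg_def Let_def
  by (simp add: power2_norm_eq_inner power2_abs mult_ac)

lemma Gm_deriv:
  assumes r1: "rperp \<noteq> 0" and r2: "rpar \<noteq> 0" "rpar \<noteq> 2"
  shows "(Gm T0 rperp rpar tw n v has_derivative (\<lambda>h. Gm T0 rperp rpar tw n v v1 *
      (- (1 / (4 * T0) - 1 / (2 * tw)) * (2 * (v1 \<bullet> h))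
       - (1 / (2 * tw)) * (2 * (v1 \<bullet> n) * (h \<bullet> n) / rperp
       + 2 * ((v1 - (v1 \<bullet> n) *\<^sub>R n - (1 - rpar) *\<^sub>R (v - (v \<bullet> n) *\<^sub>R n)) \<bullet> (h - (h \<bullet> n) *\<^sub>R n)) / (rpar * (2 - rpar)))))) (at v1)"
  unfolding Gm_def[abs_def]
  apply (rule derivative_eq_intros refl | simp add: r1 r2)+
  apply (simp add: fun_eq_iff inner_diff_right inner_diff_left inner_commute algebra_simps)
  done


lemma decomp:
  fixes v n :: "real^3" assumes n: "n \<bullet> n = 1"
  shows "v \<bullet> v = (v \<bullet> n)^2 + (v - (v \<bullet> n) *\<^sub>R n) \<bullet> (v - (v \<bullet> n) *\<^sub>R n)"
  using n by (simp add: inner_diff_right inner_diff_left inner_commute power2_eq_square algebra_simps)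

lemma orth: fixes v n :: "real^3" assumes n: "n \<bullet> n = 1"
  shows "(v - (v \<bullet> n) *\<^sub>R n) \<bullet> n = 0"
  using n by (simp add: inner_diff_left)

lemma Nbound:
  fixes w u :: "real^3"
  shows "(w - q *\<^sub>R u) \<bullet> (w - q *\<^sub>R u) \<ge> (1 - \<bar>q\<bar>) * (w \<bullet> w) - \<bar>q\<bar> * (u \<bullet> u)"
proof -
  define WW where "WW = w \<bullet> w"
  define UU where "UU = u \<bullet> u"
  define WU where "WU = w \<bullet> u"
  have e: "(w - q *\<^sub>R u) \<bullet> (w - q *\<^sub>R u) = WW - 2 * q * WU + q^2 * UU"
    unfolding WW_def UU_def WU_def
    by (simp add: inner_diff_right inner_diff_left inner_commute power2_eq_square algebra_simps)
  have p1: "0 \<le> (w - u) \<bullet> (w - u)" by simp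
  have p2: "0 \<le> (w + u) \<bullet> (w + u)" by simp
  have a1: "2 * WU \<le> WW + UU" using p1 unfolding WW_def UU_def WU_def by (simp add: inner_diff_right inner_diff_left inner_commute)
  have a2: "- 2 * WU \<le> WW + UU" using p2 unfolding WW_def UU_def WU_def by (simp add: inner_add_right inner_add_left inner_commute)
  have m: "2 * q * WU \<le> \<bar>q\<bar> * (WW + UU)"
  proof (cases "q \<ge> 0")
    case True then show ?thesis using mult_left_mono[OF a1 True] by (simp add: mult_ac)
  next
    case False
    then have "0 \<le> - q" by simp
    from mult_left_mono[OF a2 this] False show ?thesis by (simp add: mult_ac)
  qed
  have q2: "0 \<le> q^2 * UU" unfolding UU_def by simp
  have "(1 - \<bar>q\<bar>) * WW - \<bar>q\<bar> * UU \<le> WW - 2 * q * WU + q^2 * UU"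
  proof -
    define aq where "aq = \<bar>q\<bar>"
    define qU where "qU = q^2 * UU"
    define qW where "qW = q * WU"
    have m': "2 * qW \<le> aq * WW + aq * UU" using m unfolding aq_def qW_def by (simp add: algebra_simps)
    have "(1 - aq) * WW - aq * UU = WW - aq * WW - aq * UU" by (simp add: algebra_simps)
    moreover have "WW - 2 * q * WU + qU = WW - 2 * qW + qU" unfolding qW_def by simp
    ultimately show ?thesis using m' q2 unfolding aq_def[symmetric] qU_def[symmetric] by linarith
  qed
  then show ?thesis unfolding e WW_def[symmetric] UU_def[symmetric] .
qed

lemma pref_bound:
  fixes T0 tw rperp rpar :: real
  assumes T0: "T0 > 0" and tw: "\<bar>tw - T0\<bar> < T0/10"
    and rp: "0 < rperp" "rperp \<le> 1" "\<bar>1 - rperp\<bar> < 1/100"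
    and rq: "0 < rpar" "rpar < 2" "\<bar>1 - rpar\<bar> < 1/100"
  shows "0 < 2 / (rperp * rpar * (2 - rpar) * pi) * (1 / (2 * tw)^2)"
    and "2 / (rperp * rpar * (2 - rpar) * pi) * (1 / (2 * tw)^2) \<le> 1 / T0^2"
proof -
  have twb: "tw > 9*T0/10" using tw by linarith
  have rr: "rpar * (2 - rpar) \<ge> 99/100"
  proof -
    have re: "rpar * (2 - rpar) = 1 - (1 - rpar)^2" by (simp add: power2_eq_square algebra_simps)
    have "(1 - rpar)^2 = \<bar>1 - rpar\<bar> * \<bar>1 - rpar\<bar>" by (simp add: power2_eq_square)
    also have "\<dots> \<le> 1 * \<bar>1 - rpar\<bar>" using rq by (intro mult_right_mono) auto
    finally have "(1 - rpar)^2 \<le> \<bar>1 - rpar\<bar>" by simp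
    then show ?thesis using re rq by linarith
  qed
  have rp2: "rperp \<ge> 99/100" using rp by linarith
  have "(99/100) * (99/100) \<le> rperp * (rpar * (2 - rpar))" using rr rp2 by (intro mult_mono) auto
  moreover have "rperp * rpar * (2 - rpar) = rperp * (rpar * (2 - rpar))" by (simp add: mult.assoc)
  ultimately have d1: "rperp * rpar * (2 - rpar) \<ge> 98/100" by linarith
  have "(98/100) * 3 \<le> (rperp * rpar * (2 - rpar)) * pi" using d1 pi_gt3 by (intro mult_mono) auto
  then have d: "rperp * rpar * (2 - rpar) * pi \<ge> 2" by linarith
  have f1: "2 / (rperp * rpar * (2 - rpar) * pi) \<le> 1" using d by simp
  have f1p: "0 < 2 / (rperp * rpar * (2 - rpar) * pi)" using d by simp
  have "T0^2 \<le> (2 * tw)^2" using twb T0 by (intro power_mono) auto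
  moreover have "0 < T0^2 * (2 * tw)^2" using T0 twb by simp
  ultimately have f2: "1 / (2 * tw)^2 \<le> 1 / T0^2" using T0 by (intro divide_left_mono) auto
  have f2p: "0 < 1 / (2 * tw)^2" using twb T0 by simp
  show "0 < 2 / (rperp * rpar * (2 - rpar) * pi) * (1 / (2 * tw)^2)" using f1p f2p by (rule mult_pos_pos)
  have "2 / (rperp * rpar * (2 - rpar) * pi) * (1 / (2 * tw)^2) \<le> 1 * (1 / T0^2)"
    using f1 f2 f2p by (intro mult_mono) auto
  then show "2 / (rperp * rpar * (2 - rpar) * pi) * (1 / (2 * tw)^2) \<le> 1 / T0^2" by simp
qed


lemma master:
  fixes T0 tw rperp rpar :: real and n v v1 :: "real^3"
  assumes T0: "T0 > 0" and tw: "\<bar>tw - T0\<bar> < T0/10"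
    and rp: "0 < rperp" "rperp \<le> 1" "\<bar>1 - rperp\<bar> < 1/100"
    and rq: "0 < rpar" "rpar < 2" "\<bar>1 - rpar\<bar> < 1/100"
    and n: "n \<bullet> n = 1"
  shows "Acoef T0 rperp rpar tw v * Gm T0 rperp rpar tw n v v1 * exp \<bar>zarg rperp tw n v v1\<bar>
         \<le> (1/T0^2) * exp (- (1/(10*T0)) * (v \<bullet> v + v1 \<bullet> v1))"
proof -
  define a where "a = 1/(4*T0) - 1/(2*tw)"
  define u where "u = v - (v \<bullet> n) *\<^sub>R n"
  define w where "w = v1 - (v1 \<bullet> n) *\<^sub>R n"
  define N where "N = (w - (1 - rpar) *\<^sub>R u) \<bullet> (w - (1 - rpar) *\<^sub>R u)"
  define pref where "pref = 2 / (rperp * rpar * (2 - rpar) * pi) * (1 / (2 * tw)^2)"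
  define E where "E = a * (v \<bullet> v) - a * (v1 \<bullet> v1) + \<bar>zarg rperp tw n v v1\<bar>
        - (1/(2*tw)) * (((v1 \<bullet> n)^2 + (1 - rperp) * (v \<bullet> n)^2) / rperp + N / (rpar * (2 - rpar)))"
  have dv: "v \<bullet> v = (v \<bullet> n)^2 + u \<bullet> u" unfolding u_def by (rule decomp[OF n])
  have dv1: "v1 \<bullet> v1 = (v1 \<bullet> n)^2 + w \<bullet> w" unfolding w_def by (rule decomp[OF n])
  have Nb: "N \<ge> (1 - \<bar>1 - rpar\<bar>) * (w \<bullet> w) - \<bar>1 - rpar\<bar> * (u \<bullet> u)" unfolding N_def using Nbound[where w=w and u=u and q="1 - rpar"] by (simp only:)
  have N0: "N \<ge> 0" unfolding N_def by (rule inner_ge_zero)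
  have "E \<le> - (1/(10*T0)) * ((v1 \<bullet> n)^2 + (v \<bullet> n)^2 + u \<bullet> u + w \<bullet> w)"
    unfolding E_def a_def dv dv1 zarg_def
    by (rule expo_bound[OF T0 tw rp rq _ _ N0 Nb]) simp_all
  also have "\<dots> = - (1/(10*T0)) * (v \<bullet> v + v1 \<bullet> v1)" by (simp add: dv dv1 algebra_simps)
  finally have Eb: "E \<le> - (1/(10*T0)) * (v \<bullet> v + v1 \<bullet> v1)" .
  have eq: "Acoef T0 rperp rpar tw v * Gm T0 rperp rpar tw n v v1 * exp \<bar>zarg rperp tw n v v1\<bar> = pref * exp E"
  proof -
    have Gm_eq: "Gm T0 rperp rpar tw n v v1 = exp (- a * (v1 \<bullet> v1)) * exp (- (1/(2*tw)) * (((v1 \<bullet> n)^2 + (1 - rperp) * (v \<bullet> n)^2) / rperp + N / (rpar * (2 - rpar))))"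
      unfolding Gm_def N_def u_def w_def a_def by (simp only: minus_mult_left)
    have "exp E = exp (a * (v \<bullet> v)) * exp (- a * (v1 \<bullet> v1)) * exp \<bar>zarg rperp tw n v v1\<bar> * exp (- (1/(2*tw)) * (((v1 \<bullet> n)^2 + (1 - rperp) * (v \<bullet> n)^2) / rperp + N / (rpar * (2 - rpar))))"
    proof -
      have "E = a * (v \<bullet> v) + (- a * (v1 \<bullet> v1)) + \<bar>zarg rperp tw n v v1\<bar> + (- (1/(2*tw)) * (((v1 \<bullet> n)^2 + (1 - rperp) * (v \<bullet> n)^2) / rperp + N / (rpar * (2 - rpar))))"
        unfolding E_def by (simp only: diff_conv_add_uminus mult_minus_left)
      then show ?thesis by (simp only: exp_add)
    qed
    have ac: "P * X * (Y * Z) * U = P * (X * Y * U * Z)" for P X Y Z U :: real by (simp only: mult_ac)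
    have A_eq: "Acoef T0 rperp rpar tw v = pref * exp (a * (v \<bullet> v))"
      unfolding Acoef_def pref_def a_def by (simp only: power2_norm_eq_inner)
    show ?thesis unfolding A_eq Gm_eq \<open>exp E = _\<close> by (rule ac)
  qed
  have p: "0 < pref" "pref \<le> 1/T0^2" unfolding pref_def using pref_bound[OF T0 tw rp rq] by auto
  have "pref * exp E \<le> (1/T0^2) * exp (- (1/(10*T0)) * (v \<bullet> v + v1 \<bullet> v1))"
    using p Eb by (intro mult_mono) auto
  then show ?thesis using eq by simp
qed


definition gd :: "real \<Rightarrow> real \<Rightarrow> real \<Rightarrow> real \<Rightarrow> real^3 \<Rightarrow> real^3 \<Rightarrow> real^3 \<Rightarrow> real^3 \<Rightarrow> real" where
  "gd T0 rperp rpar tw n v v1 h =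
      (- (1 / (4 * T0) - 1 / (2 * tw)) * (2 * (v1 \<bullet> h))
       - (1 / (2 * tw)) * (2 * (v1 \<bullet> n) * (h \<bullet> n) / rperp
       + 2 * ((v1 - (v1 \<bullet> n) *\<^sub>R n - (1 - rpar) *\<^sub>R (v - (v \<bullet> n) *\<^sub>R n)) \<bullet> (h - (h \<bullet> n) *\<^sub>R n)) / (rpar * (2 - rpar))))"

definition Dd :: "real \<Rightarrow> real \<Rightarrow> real \<Rightarrow> real \<Rightarrow> real^3 \<Rightarrow> real^3 \<Rightarrow> real^3 \<Rightarrow> real^3 \<Rightarrow> real" where
  "Dd T0 rperp rpar tw n v v1 h =
     Gm T0 rperp rpar tw n v v1 * gd T0 rperp rpar tw n v v1 h * (n \<bullet> v1) * I0 (zarg rperp tw n v v1)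
   + Gm T0 rperp rpar tw n v v1 * (n \<bullet> h) * I0 (zarg rperp tw n v v1)
   + Gm T0 rperp rpar tw n v v1 * (n \<bullet> v1) * ((sqrt (1 - rperp) * (h \<bullet> n) * (v \<bullet> n) / (rperp * tw)) * I1 (zarg rperp tw n v v1))"

lemma Bfun_deriv:
  assumes r1: "rperp \<noteq> 0" and r2: "rpar \<noteq> 0" "rpar \<noteq> 2"
  shows "(Bfun T0 rperp rpar tw n v has_derivative Dd T0 rperp rpar tw n v v1) (at v1)"
proof -
  have fe: "Bfun T0 rperp rpar tw n v = (\<lambda>v1. Gm T0 rperp rpar tw n v v1 * (n \<bullet> v1) * I0 (zarg rperp tw n v v1))"
    by (rule ext) (rule Bfun_eq)
  have g: "(Gm T0 rperp rpar tw n v has_derivative (\<lambda>h. Gm T0 rperp rpar tw n v v1 * gd T0 rperp rpar tw n v v1 h)) (at v1)"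
    unfolding gd_def by (rule Gm_deriv[OF r1 r2])
  have z: "(zarg rperp tw n v has_derivative (\<lambda>h. sqrt (1 - rperp) * (h \<bullet> n) * (v \<bullet> n) / (rperp * tw))) (at v1)"
  proof -
    define K where "K = sqrt (1 - rperp) * (v \<bullet> n) / (rperp * tw)"
    have ze: "zarg rperp tw n v = (\<lambda>v1. (v1 \<bullet> n) * K)" unfolding zarg_def K_def by (auto simp: fun_eq_iff)
    have "((\<lambda>v1. (v1 \<bullet> n) * K) has_derivative (\<lambda>h. (h \<bullet> n) * K)) (at v1)"
      by (rule derivative_eq_intros refl | simp)+
    moreover have "(\<lambda>h. (h \<bullet> n) * K) = (\<lambda>h. sqrt (1 - rperp) * (h \<bullet> n) * (v \<bullet> n) / (rperp * tw))"
      unfolding K_def by (auto simp: fun_eq_iff)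
    ultimately show ?thesis using ze by simp
  qed
  have i: "((\<lambda>v1. I0 (zarg rperp tw n v v1)) has_derivative (\<lambda>h. (sqrt (1 - rperp) * (h \<bullet> n) * (v \<bullet> n) / (rperp * tw)) * I1 (zarg rperp tw n v v1))) (at v1)"
    by (rule I0_comp_deriv[OF z])
  have l: "((\<lambda>v1. n \<bullet> v1) has_derivative (\<lambda>h. n \<bullet> h)) (at v1)"
    by (rule derivative_eq_intros refl | simp)+
  have "((\<lambda>v1. Gm T0 rperp rpar tw n v v1 * (n \<bullet> v1) * I0 (zarg rperp tw n v v1)) has_derivative Dd T0 rperp rpar tw n v v1) (at v1)"
    unfolding Dd_def[abs_def]
    apply (rule has_derivative_eq_rhs)
     apply (rule has_derivative_mult[OF has_derivative_mult[OF g l] i])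
    apply (simp add: fun_eq_iff algebra_simps)
    done
  then show ?thesis using fe by simp
qed


lemma mx_facts:
  fixes R S :: real assumes R: "R \<ge> 0" and S: "S \<ge> 0"
  shows "1 \<le> (1+S^2)^2*(1+R^2)^2" "R \<le> (1+S^2)^2*(1+R^2)^2" "R^2 \<le> (1+S^2)^2*(1+R^2)^2"
    "R*S \<le> (1+S^2)^2*(1+R^2)^2" "R^3 \<le> (1+S^2)^2*(1+R^2)^2" "R^2*S \<le> (1+S^2)^2*(1+R^2)^2"
    "R*S^2 \<le> (1+S^2)^2*(1+R^2)^2"
proof -
  define A where "A = 1 + R^2"
  define B where "B = 1 + S^2"
  have A1: "A \<ge> 1" and B1: "B \<ge> 1" by (simp_all add: A_def B_def)
  have sq: "x \<le> 1 + x^2" if "x \<ge> 0" for x :: real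
  proof -
    have "0 \<le> (x - 1)^2" by simp
    moreover have "(x - 1)^2 = x^2 - 2*x + 1" by (simp add: power2_eq_square algebra_simps)
    ultimately show ?thesis using that by linarith
  qed
  have RA: "R \<le> A" unfolding A_def using sq[OF R] .
  have SB: "S \<le> B" unfolding B_def using sq[OF S] .
  have R2A: "R^2 \<le> A" "S^2 \<le> B" by (simp_all add: A_def B_def)
  have AA: "A \<le> A^2" using A1 by (simp add: power2_eq_square)
  have BB: "1 \<le> B^2" using B1 by (rule one_le_power)
  have BB': "B \<le> B^2" using B1 by (simp add: power2_eq_square)
  have Mx: "(1+S^2)^2*(1+R^2)^2 = B^2 * A^2" by (simp add: A_def B_def)
  have AB: "A * B \<le> B^2 * A^2" using AA BB' A1 B1 by (subst mult.commute) (intro mult_mono, auto)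
  have AA2: "A * A \<le> B^2 * A^2" using BB A1 by (simp add: power2_eq_square mult_le_cancel_right1)
  have one: "1 * 1 \<le> A * B" using A1 B1 by (intro mult_mono) auto
  show "1 \<le> (1+S^2)^2*(1+R^2)^2" unfolding Mx using one AB by linarith
  have "A \<le> A * B" using A1 B1 by simp
  then show "R \<le> (1+S^2)^2*(1+R^2)^2" unfolding Mx using RA AB by linarith
  show "R^2 \<le> (1+S^2)^2*(1+R^2)^2" unfolding Mx using R2A \<open>A \<le> A * B\<close> AB by linarith
  have "R * S \<le> A * B" using RA SB R S by (intro mult_mono) auto
  then show "R*S \<le> (1+S^2)^2*(1+R^2)^2" unfolding Mx using AB by linarith
  have "R^2 * R \<le> A * A" using RA R2A R A1 by (intro mult_mono) auto
  then show "R^3 \<le> (1+S^2)^2*(1+R^2)^2" unfolding Mx using AA2 by (simp add: power3_eq_cube power2_eq_square)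
  have "R^2 * S \<le> A * B" using R2A SB S A1 by (intro mult_mono) auto
  then show "R^2*S \<le> (1+S^2)^2*(1+R^2)^2" unfolding Mx using AB by linarith
  have "R * S^2 \<le> A * B" using RA R2A R A1 by (intro mult_mono) auto
  then show "R*S^2 \<le> (1+S^2)^2*(1+R^2)^2" unfolding Mx using AB by linarith
qed

lemma poly_exp:
  fixes c X :: real assumes c: "c > 0" and X: "X \<ge> 0"
  shows "(1+X)^2 * exp (- c * X) \<le> (1 / (min 1 (c/4))^2) * exp (- (c/2) * X)"
proof -
  define m where "m = min 1 (c/4)"
  have m: "0 < m" "m \<le> 1" "m \<le> c/4" using c by (auto simp: m_def)
  have "m * (1 + X) = m + m * X" by (simp add: algebra_simps)
  also have "\<dots> \<le> 1 + (c/4) * X" using m X by (intro add_mono mult_right_mono) auto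
  also have "\<dots> \<le> exp ((c/4) * X)" by (rule exp_ge_add_one_self)
  finally have e1: "m * (1 + X) \<le> exp ((c/4) * X)" .
  have "(m * (1 + X))^2 \<le> (exp ((c/4) * X))^2" using e1 m X by (intro power_mono) auto
  also have "\<dots> = exp ((c/4) * X + (c/4) * X)" by (simp add: power2_eq_square mult_exp_exp)
  also have "\<dots> = exp ((c/2) * X)" by (rule arg_cong[where f=exp]) simp
  finally have e2: "m^2 * (1 + X)^2 \<le> exp ((c/2) * X)" by (simp add: power_mult_distrib)
  have "(1+X)^2 \<le> exp ((c/2) * X) / m^2" using e2 m by (simp add: field_simps)
  then have "(1+X)^2 * exp (- c * X) \<le> exp ((c/2) * X) / m^2 * exp (- c * X)"
    by (intro mult_right_mono) auto
  also have "\<dots> = (1/m^2) * exp (- (c/2) * X)"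
    by (simp add: mult_exp_exp algebra_simps)
  finally show ?thesis unfolding m_def .
qed

lemma final_step:
  fixes c V W Phi Pp K0 Kp :: real
  assumes c: "c > 0" and V: "V \<ge> 0" and W: "W \<ge> 0" and Phi: "0 \<le> Phi" "Phi \<le> K0 * exp (- c * (V + W))"
    and Pp: "0 \<le> Pp" "Pp \<le> Kp * ((1+V)^2 * (1+W)^2)"
  shows "Pp * Phi \<le> (Kp * K0 * (1 / (min 1 (c/4))^2)^2) * exp (- (c/2) * W)"
proof -
  define L where "L = 1 / (min 1 (c/4))^2"
  have L0: "L \<ge> 0" by (simp add: L_def)
  have pv: "(1+V)^2 * exp (- c * V) \<le> L" 
  proof -
    have "(1+V)^2 * exp (- c * V) \<le> L * exp (- (c/2) * V)" unfolding L_def by (rule poly_exp[OF c V])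
    also have "\<dots> \<le> L * 1" using c V L0 by (intro mult_left_mono) auto
    finally show ?thesis by simp
  qed
  have pw: "(1+W)^2 * exp (- c * W) \<le> L * exp (- (c/2) * W)" unfolding L_def by (rule poly_exp[OF c W])
  have K0: "K0 \<ge> 0"
  proof (rule ccontr)
    assume "\<not> K0 \<ge> 0"
    then have "K0 * exp (- c * (V + W)) < 0" by (simp add: mult_neg_pos)
    then show False using Phi by linarith
  qed
  have X: "(1+V)^2 * (1+W)^2 > 0" using V W by simp
  have Kp: "Kp \<ge> 0"
  proof (rule ccontr)
    assume "\<not> Kp \<ge> 0"
    then have "Kp * ((1+V)^2 * (1+W)^2) < 0" using X by (simp add: mult_neg_pos)
    then show False using Pp by linarith
  qed
  have "Pp * Phi \<le> (Kp * ((1+V)^2 * (1+W)^2)) * (K0 * exp (- c * (V + W)))"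
    using Pp Phi by (intro mult_mono) auto
  also have "\<dots> = Kp * K0 * (((1+V)^2 * exp (- c * V)) * ((1+W)^2 * exp (- c * W)))"
  proof -
    have "exp (- c * (V + W)) = exp (- c * V) * exp (- c * W)" by (simp add: mult_exp_exp algebra_simps)
    then show ?thesis by (simp add: mult_ac)
  qed
  also have "\<dots> \<le> Kp * K0 * (L * (L * exp (- (c/2) * W)))"
  proof -
    have "((1+V)^2 * exp (- c * V)) * ((1+W)^2 * exp (- c * W)) \<le> L * (L * exp (- (c/2) * W))"
      by (rule mult_mono[OF pv pw L0]) simp
    then show ?thesis using Kp K0 by (intro mult_left_mono) auto
  qed
  finally show ?thesis unfolding L_def by (simp add: power2_eq_square mult_ac)
qed


lemma proj_norm:
  fixes v n :: "real^3" assumes n: "n \<bullet> n = 1"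
  shows "norm (v - (v \<bullet> n) *\<^sub>R n) \<le> norm v"
proof -
  have "(v - (v \<bullet> n) *\<^sub>R n) \<bullet> (v - (v \<bullet> n) *\<^sub>R n) \<le> v \<bullet> v" using decomp[OF n, of v] by simp
  then show ?thesis by (simp add: norm_le)
qed

lemma par_facts:
  fixes T0 tw rperp rpar :: real
  assumes T0: "T0 > 0" and tw: "\<bar>tw - T0\<bar> < T0/10"
    and rp: "0 < rperp" "rperp \<le> 1" "\<bar>1 - rperp\<bar> < 1/100"
    and rq: "0 < rpar" "rpar < 2" "\<bar>1 - rpar\<bar> < 1/100"
  shows "0 < 1/(2*tw)" "1/(2*tw) \<le> 1/T0" "\<bar>1/(4*T0) - 1/(2*tw)\<bar> \<le> 1/T0"
    "0 < 1/rperp" "1/rperp \<le> 2" "0 < 1/(rpar*(2-rpar))" "1/(rpar*(2-rpar)) \<le> 2"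
    "0 \<le> sqrt (1 - rperp) / (rperp * tw)" "sqrt (1 - rperp) / (rperp * tw) \<le> 1/T0"
    "tw > 0" "1/(2*tw) < 5/(9*T0)"
proof -
  have twb: "tw > 9*T0/10" "tw < 11*T0/10" using tw by linarith+
  show twp: "tw > 0" using twb T0 by linarith
  show "0 < 1/(2*tw)" using twp by simp
  show b2: "1/(2*tw) < 5/(9*T0)" using twb T0 twp by (simp add: field_simps)
  show b1: "1/(2*tw) \<le> 1/T0" using twb T0 twp by (simp add: field_simps)
  have "0 < 1/(2*tw)" using twp by simp
  moreover have "1/(4*T0) > 0" using T0 by simp
  ultimately show "\<bar>1/(4*T0) - 1/(2*tw)\<bar> \<le> 1/T0" using b1 by (simp add: abs_le_iff) (simp add: field_simps)
  show "0 < 1/rperp" using rp by simp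
  show "1/rperp \<le> 2" using rp by (simp add: field_simps)
  have rr: "rpar * (2 - rpar) \<ge> 99/100"
  proof -
    have re: "rpar * (2 - rpar) = 1 - (1 - rpar)^2" by (simp add: power2_eq_square algebra_simps)
    have "(1 - rpar)^2 = \<bar>1 - rpar\<bar> * \<bar>1 - rpar\<bar>" by (simp add: power2_eq_square)
    also have "\<dots> \<le> 1 * \<bar>1 - rpar\<bar>" using rq by (intro mult_right_mono) auto
    finally have "(1 - rpar)^2 \<le> \<bar>1 - rpar\<bar>" by simp
    then show ?thesis using re rq by linarith
  qed
  show "0 < 1/(rpar*(2-rpar))" using rr by simp
  show "1/(rpar*(2-rpar)) \<le> 2" using rr by (simp add: field_simps)
  show "0 \<le> sqrt (1 - rperp) / (rperp * tw)" using rp twp by simp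
  have s: "sqrt (1 - rperp) \<le> 1/10"
  proof -
    have "1 - rperp \<le> (1/10)^2" using rp by (simp add: power2_eq_square)
    then have "sqrt (1 - rperp) \<le> sqrt ((1/10)^2)" by (rule real_sqrt_le_mono)
    then show ?thesis by simp
  qed
  have "(99/100) * (9*T0/10) \<le> rperp * tw" using rp twb T0 by (intro mult_mono) auto
  then have d: "rperp * tw \<ge> T0 / 10" using T0 by linarith
  have "sqrt (1 - rperp) / (rperp * tw) \<le> (1/10) / (rperp * tw)" using s rp twp by (intro divide_right_mono) auto
  also have "\<dots> \<le> (1/10) / (T0/10)" using d T0 by (intro divide_left_mono) auto
  finally show "sqrt (1 - rperp) / (rperp * tw) \<le> 1/T0" using T0 by simp
qed

lemma Dd_bound:
  fixes T0 tw rperp rpar :: real and n v v1 h :: "real^3"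
  assumes T0: "T0 > 0" and tw: "\<bar>tw - T0\<bar> < T0/10"
    and rp: "0 < rperp" "rperp \<le> 1" "\<bar>1 - rperp\<bar> < 1/100"
    and rq: "0 < rpar" "rpar < 2" "\<bar>1 - rpar\<bar> < 1/100"
    and n: "n \<bullet> n = 1"
  shows "\<bar>Dd T0 rperp rpar tw n v v1 h\<bar> \<le> (Gm T0 rperp rpar tw n v v1 * exp \<bar>zarg rperp tw n v v1\<bar>)
           * (1 + (1/T0) * (10 * (norm v1)^2 + 5 * (norm v1 * norm v))) * norm h"
proof -
  note pf = par_facts[OF T0 tw rp rq]
  define p where "p = 1/T0"
  define b where "b = 1/(2*tw)"
  define a where "a = 1/(4*T0) - 1/(2*tw)"
  define R where "R = norm v1"
  define S where "S = norm v"
  define H where "H = norm h"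
  define x where "x = v1 \<bullet> n"
  define y where "y = v \<bullet> n"
  define hn where "hn = h \<bullet> n"
  define w' where "w' = v1 - (v1 \<bullet> n) *\<^sub>R n - (1 - rpar) *\<^sub>R (v - (v \<bullet> n) *\<^sub>R n)"
  define hp where "hp = h - (h \<bullet> n) *\<^sub>R n"
  define G where "G = Gm T0 rperp rpar tw n v v1"
  define z where "z = zarg rperp tw n v v1"
  define E where "E = exp \<bar>z\<bar>"
  define kk where "kk = sqrt (1 - rperp) / (rperp * tw)"
  have nn: "norm n = 1" using n by (simp add: norm_eq_sqrt_inner)
  have R0: "R \<ge> 0" and S0: "S \<ge> 0" and H0: "H \<ge> 0" by (simp_all add: R_def S_def H_def)
  have G0: "G > 0" by (simp add: G_def Gm_def)
  have E0: "E > 0" by (simp add: E_def)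
  have xR: "\<bar>x\<bar> \<le> R" unfolding x_def R_def using Cauchy_Schwarz_ineq2[of v1 n] nn by simp
  have yS: "\<bar>y\<bar> \<le> S" unfolding y_def S_def using Cauchy_Schwarz_ineq2[of v n] nn by simp
  have hnH: "\<bar>hn\<bar> \<le> H" unfolding hn_def H_def using Cauchy_Schwarz_ineq2[of h n] nn by simp
  have v1h: "\<bar>v1 \<bullet> h\<bar> \<le> R * H" unfolding R_def H_def by (rule Cauchy_Schwarz_ineq2)
  have hpH: "norm hp \<le> H" unfolding hp_def H_def by (rule proj_norm[OF n])
  have w'n: "norm w' \<le> R + S"
  proof -
    have "norm w' \<le> norm (v1 - (v1 \<bullet> n) *\<^sub>R n) + norm ((1 - rpar) *\<^sub>R (v - (v \<bullet> n) *\<^sub>R n))"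
      unfolding w'_def by (rule norm_triangle_ineq4)
    also have "norm ((1 - rpar) *\<^sub>R (v - (v \<bullet> n) *\<^sub>R n)) = \<bar>1 - rpar\<bar> * norm (v - (v \<bullet> n) *\<^sub>R n)" by simp
    also have "\<dots> \<le> 1 * norm v" using rq proj_norm[OF n, of v] by (intro mult_mono) auto
    finally show ?thesis using proj_norm[OF n, of v1] unfolding R_def S_def by simp
  qed
  have wh: "\<bar>w' \<bullet> hp\<bar> \<le> (R + S) * H"
  proof -
    have "norm w' * norm hp \<le> (R + S) * H" using w'n hpH R0 S0 by (intro mult_mono) auto
    then show ?thesis using Cauchy_Schwarz_ineq2[of w' hp] by linarith
  qed
  have gd_eq: "gd T0 rperp rpar tw n v v1 h = - a * (2 * (v1 \<bullet> h)) - (b * (2 * x * hn * (1/rperp)) + b * (2 * (w' \<bullet> hp) * (1/(rpar * (2 - rpar)))))"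
    unfolding gd_def unfolding w'_def[symmetric] hp_def[symmetric] unfolding x_def[symmetric] hn_def[symmetric]
    by (simp add: a_def b_def algebra_simps)
  have t1: "\<bar>a * (2 * (v1 \<bullet> h))\<bar> \<le> p * (2 * (R * H))"
    unfolding abs_mult using pf v1h T0 by (intro mult_mono) (auto simp: a_def p_def)
  have t2: "\<bar>b * (2 * x * hn * (1/rperp))\<bar> \<le> p * (2 * R * H * 2)"
    unfolding abs_mult using pf xR hnH R0 T0 by (intro mult_mono) (auto simp: b_def p_def)
  have t3: "\<bar>b * (2 * (w' \<bullet> hp) * (1/(rpar * (2 - rpar))))\<bar> \<le> p * (2 * ((R + S) * H) * 2)"
    unfolding abs_mult using pf wh R0 S0 H0 T0 by (intro mult_mono) (auto simp: b_def p_def)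
  have gdb: "\<bar>gd T0 rperp rpar tw n v v1 h\<bar> \<le> p * (10 * R + 4 * S) * H"
  proof -
    have tri: "\<bar>A - (B + C)\<bar> \<le> \<bar>A\<bar> + \<bar>B\<bar> + \<bar>C\<bar>" for A B C :: real by arith
    have eqp: "p * (2 * (R * H)) + p * (2 * R * H * 2) + p * (2 * ((R + S) * H) * 2) = p * (10 * R + 4 * S) * H"
      by (simp add: algebra_simps)
    have "\<bar>- a * (2 * (v1 \<bullet> h))\<bar> = \<bar>a * (2 * (v1 \<bullet> h))\<bar>" by simp
    then show ?thesis unfolding gd_eq using tri[of "- a * (2 * (v1 \<bullet> h))" "b * (2 * x * hn * (1/rperp))" "b * (2 * (w' \<bullet> hp) * (1/(rpar * (2 - rpar))))"] t1 t2 t3 eqp by linarith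
  qed
  have I0b: "0 \<le> I0 z" "I0 z \<le> E" using I0_nonneg I0_le by (auto simp: E_def)
  have I1b: "\<bar>I1 z\<bar> \<le> E" using I1_le by (simp add: E_def)
  have zd: "\<bar>sqrt (1 - rperp) * (h \<bullet> n) * (v \<bullet> n) / (rperp * tw)\<bar> \<le> p * H * S"
  proof -
    have "\<bar>sqrt (1 - rperp) * (h \<bullet> n) * (v \<bullet> n) / (rperp * tw)\<bar> = kk * (\<bar>hn\<bar> * \<bar>y\<bar>)"
      using pf unfolding kk_def hn_def y_def by (simp add: abs_mult field_simps)
    also have "\<dots> \<le> p * (H * S)" using pf hnH yS H0 T0 unfolding kk_def p_def by (intro mult_mono) auto
    finally show ?thesis by (simp add: mult_ac)
  qed
  have Dd_eq: "Dd T0 rperp rpar tw n v v1 h = G * gd T0 rperp rpar tw n v v1 h * x * I0 z + G * hn * I0 z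
      + G * x * ((sqrt (1 - rperp) * (h \<bullet> n) * (v \<bullet> n) / (rperp * tw)) * I1 z)"
    unfolding Dd_def G_def z_def x_def hn_def by (simp add: inner_commute)
  have d1: "\<bar>G * gd T0 rperp rpar tw n v v1 h * x * I0 z\<bar> \<le> G * (p * (10 * R + 4 * S) * H) * R * E"
    unfolding abs_mult using G0 gdb xR I0b by (intro mult_mono) auto
  have d2: "\<bar>G * hn * I0 z\<bar> \<le> G * H * E"
    unfolding abs_mult using G0 hnH I0b by (intro mult_mono) auto
  have d3: "\<bar>G * x * ((sqrt (1 - rperp) * (h \<bullet> n) * (v \<bullet> n) / (rperp * tw)) * I1 z)\<bar> \<le> G * R * ((p * H * S) * E)"
    unfolding abs_mult[of G] abs_mult[of "G * x"] abs_mult[of "sqrt (1 - rperp) * (h \<bullet> n) * (v \<bullet> n) / (rperp * tw)"] abs_mult[of G x]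
    using G0 xR zd I1b R0 by (intro mult_mono) (auto simp: p_def mult_nonneg_nonneg H0 S0 T0 less_imp_le)
  have "\<bar>Dd T0 rperp rpar tw n v v1 h\<bar> \<le> G * (p * (10 * R + 4 * S) * H) * R * E + G * H * E + G * R * ((p * H * S) * E)"
    unfolding Dd_eq using d1 d2 d3 by linarith
  also have "\<dots> = (G * E) * (1 + p * (10 * R^2 + 5 * (R * S))) * H"
    by (simp add: algebra_simps power2_eq_square)
  finally show ?thesis unfolding G_def E_def z_def p_def R_def S_def H_def .
qed


lemma Acoef_deriv:
  assumes tw: "tw \<noteq> 0"
  shows "((\<lambda>t. Acoef T0 rperp rpar t v) has_real_derivative
           Acoef T0 rperp rpar tw v * ((norm v)^2 / (2 * tw^2) - 2 / tw)) (at tw)"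
proof -
  define c0 where "c0 = 2 / (rperp * rpar * (2 - rpar) * pi)"
  define V where "V = (norm v)^2"
  define e where "e = exp ((1 / (4 * T0) - 1 / (2 * tw)) * V)"
  have fe: "(\<lambda>t. Acoef T0 rperp rpar t v) = (\<lambda>t. c0 * ((1 / (2 * t)^2) * exp ((1 / (4 * T0) - 1 / (2 * t)) * V)))"
    by (simp add: Acoef_def c0_def V_def fun_eq_iff)
  have d1: "((\<lambda>t. 1 / (2 * t)^2) has_real_derivative - 1 / (2 * tw^3)) (at tw)"
    apply (rule derivative_eq_intros refl | simp add: tw)+
    using tw by (simp add: field_simps power2_eq_square power3_eq_cube power4_eq_xxxx)
  have dg: "((\<lambda>t. (1 / (4 * T0) - 1 / (2 * t)) * V) has_real_derivative V / (2 * tw^2)) (at tw)"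
    apply (rule derivative_eq_intros refl | simp add: tw)+
    using tw by (simp add: field_simps power2_eq_square)
  have d2: "((\<lambda>t. exp ((1 / (4 * T0) - 1 / (2 * t)) * V)) has_real_derivative e * (V / (2 * tw^2))) (at tw)"
    unfolding e_def by (rule DERIV_fun_exp[OF dg])
  have "((\<lambda>t. c0 * ((1 / (2 * t)^2) * exp ((1 / (4 * T0) - 1 / (2 * t)) * V))) has_real_derivative
      c0 * ((- 1 / (2 * tw^3)) * e + (1 / (2 * tw)^2) * (e * (V / (2 * tw^2))))) (at tw)"
    using DERIV_cmult[OF DERIV_mult[OF d1 d2]] unfolding e_def by simp
  moreover have "c0 * ((- 1 / (2 * tw^3)) * e + (1 / (2 * tw)^2) * (e * (V / (2 * tw^2))))
      = (c0 * (1 / (2 * tw)^2) * e) * (V / (2 * tw^2) - 2 / tw)"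
    using tw by (simp add: field_simps power2_eq_square power3_eq_cube power4_eq_xxxx)
  moreover have "Acoef T0 rperp rpar tw v = c0 * (1 / (2 * tw)^2) * e"
    by (simp add: Acoef_def c0_def V_def e_def)
  ultimately show ?thesis using fe V_def by simp
qed

lemma compact_half_cball: "compact (half_cball d)"
proof -
  have "half_cball d = cball 0 d \<inter> {x. x$3 \<ge> 0}" by (auto simp: half_cball_def)
  moreover have "closed {x::real^3. x$3 \<ge> 0}"
    by (rule closed_Collect_le) (auto intro!: continuous_intros)
  ultimately show ?thesis by (simp add: compact_Int_closed)
qed

lemma frontier_zero:
  fixes xi :: "real^3 \<Rightarrow> real"
  assumes c: "continuous_on UNIV xi" and x: "x \<in> frontier {x. xi x < 0}"
  shows "xi x = 0"
proof -
  have cl: "closed {x. xi x \<le> 0}" using c by (intro closed_Collect_le) (auto intro!: continuous_intros)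
  have op: "open {x. xi x < 0}" using c by (intro open_Collect_less) (auto intro!: continuous_intros)
  have "x \<in> closure {x. xi x < 0}" using x by (simp add: frontier_def)
  moreover have "closure {x. xi x < 0} \<subseteq> {x. xi x \<le> 0}" using cl by (intro closure_minimal) auto
  ultimately have "xi x \<le> 0" by auto
  moreover have "x \<notin> {x. xi x < 0}" using x op by (simp add: frontier_def interior_open)
  ultimately show ?thesis by simp
qed

lemma nrm_unit: assumes "g x \<noteq> 0" shows "nrm g x \<bullet> nrm g x = 1"
  using assms by (simp add: nrm_def inner_commute power2_norm_eq_inner[symmetric] field_simps power2_eq_square)


definition "cC T0 = 1/(10*T0)"
definition "kC T0 = cC T0 / 2"
definition "LC T0 = (1 / (min 1 (cC T0/4))^2)^2"
definition "ZC T0 = sqrt (pi / kC T0) ^ DIM(real^3)"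
definition "K0C T0 = 1 / T0^2"

lemma core:
  fixes T0 tw rperp rpar :: real and n v v1 :: "real^3"
  assumes T0: "T0 > 0" and tw: "\<bar>tw - T0\<bar> < T0/10"
    and rp: "0 < rperp" "rperp \<le> 1" "\<bar>1 - rperp\<bar> < 1/100"
    and rq: "0 < rpar" "rpar < 2" "\<bar>1 - rpar\<bar> < 1/100"
    and n: "n \<bullet> n = 1"
    and Pp: "0 \<le> Pp" "Pp \<le> Kp * ((1 + (norm v)^2)^2 * (1 + (norm v1)^2)^2)"
  shows "Pp * (Acoef T0 rperp rpar tw v * Gm T0 rperp rpar tw n v v1 * exp \<bar>zarg rperp tw n v v1\<bar>)
     \<le> (Kp * K0C T0 * LC T0) * exp (- kC T0 * (norm v1)^2)"
proof -
  have c: "cC T0 > 0" using T0 by (simp add: cC_def)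
  have Phi0: "0 \<le> Acoef T0 rperp rpar tw v * Gm T0 rperp rpar tw n v v1 * exp \<bar>zarg rperp tw n v v1\<bar>"
    using pref_bound(1)[OF T0 tw rp rq] by (simp add: Acoef_def Gm_def)
  have "Acoef T0 rperp rpar tw v * Gm T0 rperp rpar tw n v v1 * exp \<bar>zarg rperp tw n v v1\<bar>
      \<le> K0C T0 * exp (- cC T0 * ((norm v)^2 + (norm v1)^2))"
    using master[OF T0 tw rp rq n, of v v1] by (simp add: K0C_def cC_def power2_norm_eq_inner)
  from final_step[OF c _ _ Phi0 this Pp]
  show ?thesis by (simp add: LC_def kC_def)
qed

lemma Bfun_le:
  assumes "0 < n \<bullet> v1" "0 < A"
  shows "A * Bfun T0 rperp rpar tw n v v1 \<le> (n \<bullet> v1) * (A * Gm T0 rperp rpar tw n v v1 * exp \<bar>zarg rperp tw n v v1\<bar>)"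
    "0 \<le> Bfun T0 rperp rpar tw n v v1"
proof -
  have G: "Gm T0 rperp rpar tw n v v1 > 0" by (simp add: Gm_def)
  have "A * Gm T0 rperp rpar tw n v v1 * (n \<bullet> v1) * I0 (zarg rperp tw n v v1)
     \<le> A * Gm T0 rperp rpar tw n v v1 * (n \<bullet> v1) * exp \<bar>zarg rperp tw n v v1\<bar>"
    using assms G I0_le by (intro mult_left_mono) auto
  then show "A * Bfun T0 rperp rpar tw n v v1 \<le> (n \<bullet> v1) * (A * Gm T0 rperp rpar tw n v v1 * exp \<bar>zarg rperp tw n v v1\<bar>)"
    by (simp add: Bfun_eq mult_ac)
  show "0 \<le> Bfun T0 rperp rpar tw n v v1" using assms G I0_nonneg by (simp add: Bfun_eq)
qed

lemma int1:
  fixes T0 tw rperp rpar :: real and n v :: "real^3"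
  assumes T0: "T0 > 0" and tw: "\<bar>tw - T0\<bar> < T0/10"
    and rp: "0 < rperp" "rperp \<le> 1" "\<bar>1 - rperp\<bar> < 1/100"
    and rq: "0 < rpar" "rpar < 2" "\<bar>1 - rpar\<bar> < 1/100"
    and n: "n \<bullet> n = 1"
  shows "ennreal (Acoef T0 rperp rpar tw v) *
           (\<integral>\<^sup>+ v1. ennreal ((1 + (norm v1)^2 + (norm v)^2) * Bfun T0 rperp rpar tw n v v1)
              * indicator {v1. n \<bullet> v1 > 0} v1 \<partial>lborel) \<le> ennreal ((3 * K0C T0 * LC T0) * ZC T0)"
  unfolding ZC_def
proof (rule int_bound)
  show A: "0 < Acoef T0 rperp rpar tw v" using pref_bound(1)[OF T0 tw rp rq] by (simp add: Acoef_def)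
  show "0 \<le> 3 * K0C T0 * LC T0" by (simp add: K0C_def LC_def)
  show "0 < kC T0" using T0 by (simp add: kC_def cC_def)
  fix v1 :: "real^3" assume "v1 \<in> {v1. n \<bullet> v1 > 0}"
  then have x: "0 < n \<bullet> v1" by simp
  define R where "R = norm v1"
  define S where "S = norm v"
  have R0: "R \<ge> 0" "S \<ge> 0" by (simp_all add: R_def S_def)
  have xR: "n \<bullet> v1 \<le> R"
    using Cauchy_Schwarz_ineq2[of n v1] n unfolding R_def by (simp add: norm_eq_sqrt_inner)
  note mx = mx_facts[OF R0]
  have "(1 + R^2 + S^2) * (n \<bullet> v1) \<le> (1 + R^2 + S^2) * R" using xR R0 by (intro mult_left_mono) auto
  also have "\<dots> = R + R^3 + R * S^2" by (simp add: algebra_simps power2_eq_square power3_eq_cube)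
  also have "\<dots> \<le> 3 * ((1 + S^2)^2 * (1 + R^2)^2)" using mx by linarith
  finally have Pb: "(1 + R^2 + S^2) * (n \<bullet> v1) \<le> 3 * ((1 + S^2)^2 * (1 + R^2)^2)" .
  have P0: "0 \<le> (1 + R^2 + S^2) * (n \<bullet> v1)" using x by simp
  have "Acoef T0 rperp rpar tw v * ((1 + R^2 + S^2) * Bfun T0 rperp rpar tw n v v1)
      = (1 + R^2 + S^2) * (Acoef T0 rperp rpar tw v * Bfun T0 rperp rpar tw n v v1)" by (simp add: mult_ac)
  also have "\<dots> \<le> (1 + R^2 + S^2) * ((n \<bullet> v1) * (Acoef T0 rperp rpar tw v * Gm T0 rperp rpar tw n v v1 * exp \<bar>zarg rperp tw n v v1\<bar>))"
    using Bfun_le(1)[OF x A] by (intro mult_left_mono) auto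
  also have "\<dots> = ((1 + R^2 + S^2) * (n \<bullet> v1)) * (Acoef T0 rperp rpar tw v * Gm T0 rperp rpar tw n v v1 * exp \<bar>zarg rperp tw n v v1\<bar>)"
    by (simp add: mult_ac)
  also have "\<dots> \<le> (3 * K0C T0 * LC T0) * exp (- kC T0 * (norm v1)^2)"
    by (rule core[OF T0 tw rp rq n P0]) (use Pb in \<open>simp add: R_def S_def\<close>)
  finally show "Acoef T0 rperp rpar tw v * ((1 + (norm v1)^2 + (norm v)^2) * Bfun T0 rperp rpar tw n v v1)
      \<le> 3 * K0C T0 * LC T0 * exp (- kC T0 * (norm v1)^2)" by (simp add: R_def S_def)
qed

lemma int2:
  fixes T0 tw rperp rpar g0 eps :: real and n v :: "real^3" and al :: "real^3 \<Rightarrow> real"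
  assumes T0: "T0 > 0" and tw: "\<bar>tw - T0\<bar> < T0/10"
    and rp: "0 < rperp" "rperp \<le> 1" "\<bar>1 - rperp\<bar> < 1/100"
    and rq: "0 < rpar" "rpar < 2" "\<bar>1 - rpar\<bar> < 1/100"
    and n: "n \<bullet> n = 1" and g0: "g0 > 0" and eps: "eps > 0"
    and al: "\<And>v1. 0 < n \<bullet> v1 \<Longrightarrow> (\<exists>gn. gn \<ge> g0 \<and> al v1 = gn * (n \<bullet> v1)) \<or> al v1 \<ge> eps"
  shows "ennreal (Acoef T0 rperp rpar tw v) *
           (\<integral>\<^sup>+ v1. ennreal (Bfun T0 rperp rpar tw n v v1 / al v1)
              * indicator {v1. n \<bullet> v1 > 0} v1 \<partial>lborel) \<le> ennreal (((1/g0 + 1/eps) * K0C T0 * LC T0) * ZC T0)"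
  unfolding ZC_def
proof (rule int_bound)
  show A: "0 < Acoef T0 rperp rpar tw v" using pref_bound(1)[OF T0 tw rp rq] by (simp add: Acoef_def)
  show "0 \<le> (1/g0 + 1/eps) * K0C T0 * LC T0" using g0 eps by (simp add: K0C_def LC_def)
  show "0 < kC T0" using T0 by (simp add: kC_def cC_def)
  fix v1 :: "real^3" assume "v1 \<in> {v1. n \<bullet> v1 > 0}"
  then have x: "0 < n \<bullet> v1" by simp
  define R where "R = norm v1"
  define S where "S = norm v"
  define Phi where "Phi = Acoef T0 rperp rpar tw v * Gm T0 rperp rpar tw n v v1 * exp \<bar>zarg rperp tw n v v1\<bar>"
  define B where "B = Bfun T0 rperp rpar tw n v v1"
  have R0: "R \<ge> 0" "S \<ge> 0" by (simp_all add: R_def S_def)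
  have Phi0: "Phi \<ge> 0" unfolding Phi_def using A by (simp add: Gm_def)
  have xR: "n \<bullet> v1 \<le> R"
    using Cauchy_Schwarz_ineq2[of n v1] n unfolding R_def by (simp add: norm_eq_sqrt_inner)
  note mx = mx_facts[OF R0]
  have B0: "0 \<le> B" unfolding B_def by (rule Bfun_le(2)[OF x A])
  have AB: "Acoef T0 rperp rpar tw v * B \<le> (n \<bullet> v1) * Phi" unfolding B_def Phi_def by (rule Bfun_le(1)[OF x A])
  have main: "Acoef T0 rperp rpar tw v * (B / al v1) \<le> (1/g0 + R/eps) * Phi"
  proof (cases "\<exists>gn. gn \<ge> g0 \<and> al v1 = gn * (n \<bullet> v1)")
    case True
    then obtain gn where gn: "gn \<ge> g0" "al v1 = gn * (n \<bullet> v1)" by blast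
    have gpos: "gn > 0" using gn g0 by simp
    have "Acoef T0 rperp rpar tw v * (B / al v1) = (Acoef T0 rperp rpar tw v * Gm T0 rperp rpar tw n v v1 * I0 (zarg rperp tw n v v1)) / gn"
      unfolding B_def gn(2) Bfun_eq using x gpos by (simp add: field_simps)
    also have "\<dots> \<le> Phi / gn" unfolding Phi_def using A gpos I0_le
      by (intro divide_right_mono mult_left_mono) (auto simp: Gm_def)
    also have "\<dots> \<le> Phi / g0" using Phi0 gn g0 by (intro divide_left_mono) auto
    also have "\<dots> \<le> (1/g0 + R/eps) * Phi" using Phi0 R0 eps by (simp add: algebra_simps)
    finally show ?thesis .
  next
    case False
    then have ae: "al v1 \<ge> eps" using al[OF x] by blast
    have "Acoef T0 rperp rpar tw v * (B / al v1) \<le> Acoef T0 rperp rpar tw v * (B / eps)"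
      using A B0 ae eps by (intro mult_left_mono divide_left_mono) auto
    also have "\<dots> = (Acoef T0 rperp rpar tw v * B) / eps" by simp
    also have "\<dots> \<le> ((n \<bullet> v1) * Phi) / eps" using AB eps by (intro divide_right_mono) auto
    also have "\<dots> \<le> (R * Phi) / eps" using xR Phi0 eps by (intro divide_right_mono mult_right_mono) auto
    also have "\<dots> \<le> (1/g0 + R/eps) * Phi" using Phi0 g0 by (simp add: algebra_simps)
    finally show ?thesis .
  qed
  have P0: "0 \<le> 1/g0 + R/eps" using g0 eps R0 by simp
  have Pb: "1/g0 + R/eps \<le> (1/g0 + 1/eps) * ((1 + S^2)^2 * (1 + R^2)^2)"
  proof -
    have "1/g0 * 1 \<le> 1/g0 * ((1 + S^2)^2 * (1 + R^2)^2)" using mx g0 by (intro mult_left_mono) auto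
    moreover have "R/eps \<le> 1/eps * ((1 + S^2)^2 * (1 + R^2)^2)" using mx eps by (simp add: divide_right_mono)
    ultimately show ?thesis by (simp add: algebra_simps)
  qed
  have "(1/g0 + R/eps) * Phi \<le> ((1/g0 + 1/eps) * K0C T0 * LC T0) * exp (- kC T0 * (norm v1)^2)"
    unfolding Phi_def by (rule core[OF T0 tw rp rq n P0]) (use Pb in \<open>simp add: R_def S_def\<close>)
  with main show "Acoef T0 rperp rpar tw v * (Bfun T0 rperp rpar tw n v v1 / al v1)
      \<le> (1/g0 + 1/eps) * K0C T0 * LC T0 * exp (- kC T0 * (norm v1)^2)" unfolding B_def by linarith
qed

lemma int3:
  fixes T0 tw rperp rpar :: real and n v :: "real^3"
  assumes T0: "T0 > 0" and tw: "\<bar>tw - T0\<bar> < T0/10"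
    and rp: "0 < rperp" "rperp \<le> 1" "\<bar>1 - rperp\<bar> < 1/100"
    and rq: "0 < rpar" "rpar < 2" "\<bar>1 - rpar\<bar> < 1/100"
    and n: "n \<bullet> n = 1"
  shows "ennreal (Acoef T0 rperp rpar tw v) *
           (\<integral>\<^sup>+ v1. ennreal ((1 + norm v1) * onorm (frechet_derivative (Bfun T0 rperp rpar tw n v) (at v1)))
              * indicator {v1. n \<bullet> v1 > 0} v1 \<partial>lborel) \<le> ennreal (((2 + 30 / T0) * K0C T0 * LC T0) * ZC T0)"
  unfolding ZC_def
proof (rule int_bound)
  show A: "0 < Acoef T0 rperp rpar tw v" using pref_bound(1)[OF T0 tw rp rq] by (simp add: Acoef_def)
  show "0 \<le> (2 + 30 / T0) * K0C T0 * LC T0" using T0 by (simp add: K0C_def LC_def)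
  show "0 < kC T0" using T0 by (simp add: kC_def cC_def)
  fix v1 :: "real^3" assume "v1 \<in> {v1. n \<bullet> v1 > 0}"
  define R where "R = norm v1"
  define S where "S = norm v"
  define p where "p = 1 / T0"
  define GE where "GE = Gm T0 rperp rpar tw n v v1 * exp \<bar>zarg rperp tw n v v1\<bar>"
  define Br where "Br = 1 + p * (10 * R^2 + 5 * (R * S))"
  have R0: "R \<ge> 0" "S \<ge> 0" by (simp_all add: R_def S_def)
  have p0: "p > 0" using T0 by (simp add: p_def)
  have GE0: "GE \<ge> 0" by (simp add: GE_def Gm_def)
  note mx = mx_facts[OF R0]
  have fd: "frechet_derivative (Bfun T0 rperp rpar tw n v) (at v1) = Dd T0 rperp rpar tw n v v1"
    using Bfun_deriv[of rperp rpar T0 tw n v v1] rp rq by (intro frechet_derivative_at[symmetric]) auto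
  have on: "onorm (Dd T0 rperp rpar tw n v v1) \<le> GE * Br"
    by (rule onorm_le) (use Dd_bound[OF T0 tw rp rq n] in \<open>simp add: GE_def Br_def p_def R_def S_def\<close>)
  have Br0: "Br \<ge> 0" unfolding Br_def using p0 R0 by simp
  have main: "Acoef T0 rperp rpar tw v * ((1 + R) * onorm (Dd T0 rperp rpar tw n v v1))
      \<le> ((1 + R) * Br) * (Acoef T0 rperp rpar tw v * GE)"
  proof -
    have "Acoef T0 rperp rpar tw v * ((1 + R) * onorm (Dd T0 rperp rpar tw n v v1))
        \<le> Acoef T0 rperp rpar tw v * ((1 + R) * (GE * Br))"
      using A R0 on by (intro mult_left_mono) auto
    then show ?thesis by (simp add: mult_ac)
  qed
  have P0: "0 \<le> (1 + R) * Br" using R0 Br0 by simp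
  have Pb: "(1 + R) * Br \<le> (2 + 30 / T0) * ((1 + S^2)^2 * (1 + R^2)^2)"
  proof -
    define M where "M = (1 + S^2)^2 * (1 + R^2)^2"
    have e: "(1 + R) * Br = 1 + R + 10 * (p * R^2) + 5 * (p * (R * S)) + 10 * (p * R^3) + 5 * (p * (R^2 * S))"
      unfolding Br_def by (simp add: algebra_simps power2_eq_square power3_eq_cube)
    have m1: "p * R^2 \<le> p * M" "p * (R * S) \<le> p * M" "p * R^3 \<le> p * M" "p * (R^2 * S) \<le> p * M"
      using mx p0 unfolding M_def by (auto intro!: mult_left_mono)
    have "(2 + 30 / T0) * M = 2 * M + 30 * (p * M)" by (simp add: p_def algebra_simps)
    then show ?thesis unfolding e M_def[symmetric] using m1 mx unfolding M_def[symmetric] by linarith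
  qed
  have "((1 + R) * Br) * (Acoef T0 rperp rpar tw v * GE) \<le> ((2 + 30 / T0) * K0C T0 * LC T0) * exp (- kC T0 * (norm v1)^2)"
  proof -
    have "Acoef T0 rperp rpar tw v * GE = Acoef T0 rperp rpar tw v * Gm T0 rperp rpar tw n v v1 * exp \<bar>zarg rperp tw n v v1\<bar>"
      unfolding GE_def by (simp only: mult.assoc)
    moreover have "((1 + R) * Br) * (Acoef T0 rperp rpar tw v * Gm T0 rperp rpar tw n v v1 * exp \<bar>zarg rperp tw n v v1\<bar>) \<le> ((2 + 30 / T0) * K0C T0 * LC T0) * exp (- kC T0 * (norm v1)^2)"
      by (rule core[OF T0 tw rp rq n P0]) (use Pb in \<open>simp add: R_def S_def\<close>)
    ultimately show ?thesis by (simp only:)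
  qed
  with main show "Acoef T0 rperp rpar tw v * ((1 + norm v1) * onorm (frechet_derivative (Bfun T0 rperp rpar tw n v) (at v1)))
      \<le> (2 + 30 / T0) * K0C T0 * LC T0 * exp (- kC T0 * (norm v1)^2)" unfolding fd R_def by linarith
qed

lemma int4:
  fixes T0 tw rperp rpar Kd D :: real and n v :: "real^3"
  assumes T0: "T0 > 0" and tw: "\<bar>tw - T0\<bar> < T0/10"
    and rp: "0 < rperp" "rperp \<le> 1" "\<bar>1 - rperp\<bar> < 1/100"
    and rq: "0 < rpar" "rpar < 2" "\<bar>1 - rpar\<bar> < 1/100"
    and n: "n \<bullet> n = 1" and Kd: "Kd \<ge> 0" and D: "\<bar>D\<bar> \<le> Kd * Acoef T0 rperp rpar tw v * (1 + (norm v)^2)"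
  shows "ennreal \<bar>D\<bar> *
           (\<integral>\<^sup>+ v1. ennreal (Bfun T0 rperp rpar tw n v v1)
              * indicator {v1. n \<bullet> v1 > 0} v1 \<partial>lborel) \<le> ennreal ((2 * (Kd + 1) * K0C T0 * LC T0) * ZC T0)"
proof -
  define A' where "A' = (Kd + 1) * Acoef T0 rperp rpar tw v * (1 + (norm v)^2)"
  have A: "0 < Acoef T0 rperp rpar tw v" using pref_bound(1)[OF T0 tw rp rq] by (simp add: Acoef_def)
  have vpos: "0 < 1 + (norm v)^2" by (simp add: add_pos_nonneg)
  have A'pos: "0 < A'" unfolding A'_def using A Kd vpos by (intro mult_pos_pos) auto
  have "\<bar>D\<bar> \<le> A'" unfolding A'_def using D A Kd
    by (smt (verit) mult_right_mono zero_le_power2 mult_nonneg_nonneg)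
  then have "ennreal \<bar>D\<bar> *  (\<integral>\<^sup>+ v1. ennreal (Bfun T0 rperp rpar tw n v v1) * indicator {v1. n \<bullet> v1 > 0} v1 \<partial>lborel)
     \<le> ennreal A' * (\<integral>\<^sup>+ v1. ennreal (Bfun T0 rperp rpar tw n v v1) * indicator {v1. n \<bullet> v1 > 0} v1 \<partial>lborel)"
    by (intro mult_right_mono ennreal_leI) auto
  also have "\<dots> \<le> ennreal ((2 * (Kd + 1) * K0C T0 * LC T0) * ZC T0)"
    unfolding ZC_def
  proof (rule int_bound[OF A'pos])
    show "0 \<le> 2 * (Kd + 1) * K0C T0 * LC T0" using Kd by (simp add: K0C_def LC_def)
    show "0 < kC T0" using T0 by (simp add: kC_def cC_def)
    fix v1 :: "real^3" assume "v1 \<in> {v1. n \<bullet> v1 > 0}"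
    then have x: "0 < n \<bullet> v1" by simp
    define R where "R = norm v1"
    define S where "S = norm v"
    have R0: "R \<ge> 0" "S \<ge> 0" by (simp_all add: R_def S_def)
    have xR: "n \<bullet> v1 \<le> R"
      using Cauchy_Schwarz_ineq2[of n v1] n unfolding R_def by (simp add: norm_eq_sqrt_inner)
    note mx = mx_facts[OF R0]
    define Phi where "Phi = Acoef T0 rperp rpar tw v * Gm T0 rperp rpar tw n v v1 * exp \<bar>zarg rperp tw n v v1\<bar>"
    have "A' * Bfun T0 rperp rpar tw n v v1 = ((Kd + 1) * (1 + S^2)) * (Acoef T0 rperp rpar tw v * Bfun T0 rperp rpar tw n v v1)"
      unfolding A'_def S_def by (simp add: mult_ac)
    also have "\<dots> \<le> ((Kd + 1) * (1 + S^2)) * ((n \<bullet> v1) * Phi)"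
      unfolding Phi_def using Bfun_le(1)[OF x A] Kd by (intro mult_left_mono) auto
    also have "\<dots> = ((Kd + 1) * (1 + S^2) * (n \<bullet> v1)) * Phi" by (simp add: mult_ac)
    also have "\<dots> \<le> (2 * (Kd + 1) * K0C T0 * LC T0) * exp (- kC T0 * (norm v1)^2)"
      unfolding Phi_def
    proof (rule core[OF T0 tw rp rq n])
      show "0 \<le> (Kd + 1) * (1 + S^2) * (n \<bullet> v1)" using Kd x by simp
      have "(1 + S^2) * (n \<bullet> v1) \<le> (1 + S^2) * R" using xR by (intro mult_left_mono) auto
      also have "\<dots> = R + R * S^2" by (simp add: algebra_simps)
      also have "\<dots> \<le> 2 * ((1 + S^2)^2 * (1 + R^2)^2)" using mx by linarith
      finally have "(Kd + 1) * ((1 + S^2) * (n \<bullet> v1)) \<le> (Kd + 1) * (2 * ((1 + S^2)^2 * (1 + R^2)^2))"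
        using Kd by (intro mult_left_mono) auto
      then show "(Kd + 1) * (1 + S^2) * (n \<bullet> v1) \<le> 2 * (Kd + 1) * ((1 + (norm v)^2)^2 * (1 + (norm v1)^2)^2)"
        by (simp only: R_def S_def mult_ac)
    qed
    finally show "A' * Bfun T0 rperp rpar tw n v v1 \<le> 2 * (Kd + 1) * K0C T0 * LC T0 * exp (- kC T0 * (norm v1)^2)" .
  qed
  finally show ?thesis .
qed


lemma D_chain:
  fixes eta :: "real^3 \<Rightarrow> real^3" and Tw :: "real^3 \<Rightarrow> real" and y e :: "real^3"
    and E :: "(real^3) \<Rightarrow>\<^sub>L (real^3)" and TD :: "(real^3) \<Rightarrow>\<^sub>L real"
  assumes dE: "(eta has_derivative blinfun_apply E) (at y)"
    and dT: "(Tw has_derivative blinfun_apply TD) (at (eta y))"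
    and tw: "Tw (eta y) \<noteq> 0"
    and dD: "((\<lambda>t. Acoef T0 rperp rpar (Tw (eta (y + t *\<^sub>R e))) v) has_real_derivative D) (at 0)"
  shows "D = blinfun_apply TD (blinfun_apply E e) *
     (Acoef T0 rperp rpar (Tw (eta y)) v * ((norm v)^2 / (2 * (Tw (eta y))^2) - 2 / Tw (eta y)))"
proof -
  define A' where "A' = Acoef T0 rperp rpar (Tw (eta y)) v * ((norm v)^2 / (2 * (Tw (eta y))^2) - 2 / Tw (eta y))"
  have dp: "((\<lambda>t::real. y + t *\<^sub>R e) has_derivative (\<lambda>t. t *\<^sub>R e)) (at 0)"
    by (rule derivative_eq_intros refl | simp)+
  have dE': "(eta has_derivative blinfun_apply E) (at ((\<lambda>t::real. y + t *\<^sub>R e) 0))" using dE by simp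
  note c1 = diff_chain_at[OF dp dE']
  have dT': "(Tw has_derivative blinfun_apply TD) (at ((eta \<circ> (\<lambda>t::real. y + t *\<^sub>R e)) 0))" using dT by simp
  note c2 = diff_chain_at[OF c1 dT']
  have dA: "((\<lambda>t. Acoef T0 rperp rpar t v) has_real_derivative A') (at ((Tw \<circ> (eta \<circ> (\<lambda>t::real. y + t *\<^sub>R e))) 0))"
    using Acoef_deriv[OF tw, of T0 rperp rpar v] by (simp add: A'_def)
  note c3 = DERIV_compose_FDERIV[OF dA c2]
  have fe: "(\<lambda>x. (blinfun_apply TD \<circ> (blinfun_apply E \<circ> (\<lambda>t. t *\<^sub>R e))) x * A') = (\<lambda>x. (blinfun_apply TD (blinfun_apply E e) * A') * x)"
    by (simp add: fun_eq_iff blinfun.scaleR_right)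
  have "((\<lambda>t. Acoef T0 rperp rpar (Tw (eta (y + t *\<^sub>R e))) v) has_real_derivative (blinfun_apply TD (blinfun_apply E e) * A')) (at 0)"
    unfolding has_field_derivative_def using c3 unfolding fe by (simp add: o_def)
  from DERIV_unique[OF dD this] show ?thesis by (simp add: A'_def)
qed

lemma Aprime_bound:
  fixes T0 tw A V :: real
  assumes T0: "T0 > 0" and tw: "\<bar>tw - T0\<bar> < T0/10" and A: "A > 0" and V: "V \<ge> 0"
  shows "\<bar>A * (V / (2 * tw^2) - 2 / tw)\<bar> \<le> (3 / T0 + 1 / T0^2) * A * (1 + V)"
proof -
  have twb: "tw > 9*T0/10" using tw by linarith
  have twp: "tw > 0" using twb T0 by linarith
  have a1: "2 / tw \<le> 3 / T0" using twb T0 twp by (simp add: field_simps)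
  have "(9*T0/10)^2 \<le> tw^2" using twb T0 by (intro power_mono) auto
  moreover have "(9*T0/10)^2 = 81/100 * T0^2" by (simp add: power2_eq_square)
  moreover have "T0^2 \<ge> 0" by simp
  ultimately have "T0^2 \<le> 2 * tw^2" by linarith
  then have a2: "1 / (2 * tw^2) \<le> 1 / T0^2" using T0 twp by (intro divide_left_mono) auto
  have e1: "\<bar>V / (2 * tw^2) - 2 / tw\<bar> \<le> V / (2 * tw^2) + 2 / tw" using V twp by (simp add: abs_le_iff)
  have "V * (1 / (2 * tw^2)) \<le> V * (1 / T0^2)" using a2 V by (intro mult_left_mono) auto
  then have e2: "V / (2 * tw^2) \<le> V * (1 / T0^2)" by simp
  have "\<bar>V / (2 * tw^2) - 2 / tw\<bar> \<le> V * (1 / T0^2) + 3 / T0" using e1 e2 a1 by linarith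
  also have "\<dots> \<le> (3 / T0 + 1 / T0^2) * (1 + V)"
  proof -
    have g: "(a + b) * (1 + V) = a + b + V * a + V * b" for a b :: real by (simp add: algebra_simps)
    have "(3 / T0 + 1 / T0^2) * (1 + V) = 3 / T0 + 1 / T0^2 + V * (3 / T0) + V * (1 / T0^2)" by (rule g)
    moreover have "0 \<le> V * (3 / T0)" "0 \<le> 1 / T0^2" using V T0 by auto
    ultimately show ?thesis by linarith
  qed
  finally have "\<bar>V / (2 * tw^2) - 2 / tw\<bar> \<le> (3 / T0 + 1 / T0^2) * (1 + V)" .
  then have "A * \<bar>V / (2 * tw^2) - 2 / tw\<bar> \<le> A * ((3 / T0 + 1 / T0^2) * (1 + V))" using A by (intro mult_left_mono) auto
  then show ?thesis using A by (simp add: abs_mult mult_ac)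
qed


lemma main_inner:
  fixes xi :: "real^3 \<Rightarrow> real" and gxi :: "real^3 \<Rightarrow> real^3" and hxi :: "real^3 \<Rightarrow> real^3^3"
    and T0 :: real and \<epsilon> :: real and chi :: "real \<Rightarrow> real"
    and Tw :: "real^3 \<Rightarrow> real" and P :: "(real^3) set" and eta :: "real^3 \<Rightarrow> real^3 \<Rightarrow> real^3"
    and \<delta>1 g0 \<delta>0 :: real
  assumes T0_pos: "T0 > 0" and eps_pos: "\<epsilon> > 0" and chi_mono: "mono chi"
    and chi_id: "\<And>s. 0 \<le> s \<Longrightarrow> s \<le> \<epsilon> \<Longrightarrow> chi s = s"
    and xz: "\<And>x. x \<in> frontier {x. xi x < 0} \<Longrightarrow> xi x = 0"
    and g0: "g0 > 0" "\<And>x. x \<in> frontier {x. xi x < 0} \<Longrightarrow> g0 \<le> norm (gxi x)"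
    and Fc: "compact (frontier {x. xi x < 0})"
    and d0: "\<delta>0 \<le> 1/100" "\<delta>0 \<le> T0/10"
    and Twc: "\<exists>U. open U \<and> frontier {x. xi x < 0} \<subseteq> U \<and> C1_on U Tw"
    and Twb: "\<forall>x\<in>frontier {x. xi x < 0}. \<bar>Tw x - T0\<bar> < \<delta>0"
    and fP: "finite P"
    and etaC: "\<forall>p\<in>P. \<exists>V. open V \<and> half_cball \<delta>1 \<subseteq> V \<and> C2_on V (eta p)"
  shows "(\<exists>C. \<forall>rperp rpar.
           0 < rperp \<and> rperp \<le> 1 \<and> 0 < rpar \<and> rpar < 2
           \<and> max \<bar>1 - rperp\<bar> \<bar>1 - rpar\<bar> < \<delta>0
           \<longrightarrow> (\<forall>x1\<in>frontier {x. xi x < 0}. \<forall>v :: real^3.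
                 ennreal (Acoef T0 rperp rpar (Tw x1) v) *
                   (\<integral>\<^sup>+ v1. ennreal ((1 + (norm v1)^2 + (norm v)^2)
                        * Bfun T0 rperp rpar (Tw x1) (nrm gxi x1) v v1)
                      * indicator {v1. nrm gxi x1 \<bullet> v1 > 0} v1 \<partial>lborel) \<le> ennreal C
               \<and> ennreal (Acoef T0 rperp rpar (Tw x1) v) *
                   (\<integral>\<^sup>+ v1. ennreal (Bfun T0 rperp rpar (Tw x1) (nrm gxi x1) v v1
                        / kin_alpha chi xi gxi hxi x1 v1)
                      * indicator {v1. nrm gxi x1 \<bullet> v1 > 0} v1 \<partial>lborel) \<le> ennreal C
               \<and> ennreal (Acoef T0 rperp rpar (Tw x1) v) *
                   (\<integral>\<^sup>+ v1. ennreal ((1 + norm v1)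
                        * onorm (frechet_derivative (Bfun T0 rperp rpar (Tw x1) (nrm gxi x1) v) (at v1)))
                      * indicator {v1. nrm gxi x1 \<bullet> v1 > 0} v1 \<partial>lborel) \<le> ennreal C
               \<and> (\<forall>p\<in>P. \<forall>y\<in>half_ball \<delta>1. \<forall>i\<in>{1,2}. \<forall>D.
                    y$3 = 0 \<and> eta p y = x1 \<and>
                    ((\<lambda>t. Acoef T0 rperp rpar (Tw (eta p (y + t *\<^sub>R axis i 1))) v)
                       has_real_derivative D) (at 0)
                    \<longrightarrow> ennreal \<bar>D\<bar> *
                      (\<integral>\<^sup>+ v1. ennreal (Bfun T0 rperp rpar (Tw x1) (nrm gxi x1) v v1)
                         * indicator {v1. nrm gxi x1 \<bullet> v1 > 0} v1 \<partial>lborel) \<le> ennreal C)))"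
proof -
  obtain U Tw' where U: "open U" "frontier {x. xi x < 0} \<subseteq> U"
      "\<And>x. x \<in> U \<Longrightarrow> (Tw has_derivative blinfun_apply (Tw' x)) (at x)" "continuous_on U Tw'"
    using Twc unfolding C1_on_def by blast
  obtain MT where MT: "MT > 0" "\<And>x. x \<in> frontier {x. xi x < 0} \<Longrightarrow> norm (Tw' x) \<le> MT"
  proof -
    have "compact (Tw' ` frontier {x. xi x < 0})"
      by (rule compact_continuous_image[OF continuous_on_subset[OF U(4) U(2)] Fc])
    then have "bounded (Tw' ` frontier {x. xi x < 0})" by (rule compact_imp_bounded)
    then show ?thesis using that unfolding bounded_pos by auto
  qed
  have ME1: "\<forall>p\<in>P. \<exists>M. \<forall>y\<in>half_ball \<delta>1. \<exists>E. (eta p has_derivative blinfun_apply E) (at y) \<and> norm E \<le> M"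
  proof
    fix p assume "p \<in> P"
    then obtain V where V: "open V" "half_cball \<delta>1 \<subseteq> V" "C2_on V (eta p)" using etaC by blast
    then obtain f' where f': "\<And>x. x \<in> V \<Longrightarrow> (eta p has_derivative blinfun_apply (f' x)) (at x)" "C1_on V f'"
      unfolding C2_on_def by blast
    then obtain f'' where f'': "\<And>x. x \<in> V \<Longrightarrow> (f' has_derivative blinfun_apply (f'' x)) (at x)"
      unfolding C1_on_def by blast
    have "continuous_on V f'"
      by (intro continuous_at_imp_continuous_on ballI has_derivative_continuous[OF f''])
    then have "compact (f' ` half_cball \<delta>1)"
      by (intro compact_continuous_image compact_half_cball) (rule continuous_on_subset[OF _ V(2)])
    then have "bounded (f' ` half_cball \<delta>1)" by (rule compact_imp_bounded)
    then obtain M where M: "\<And>z. z \<in> f' ` half_cball \<delta>1 \<Longrightarrow> norm z \<le> M" unfolding bounded_iff by blast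
    show "\<exists>M. \<forall>y\<in>half_ball \<delta>1. \<exists>E. (eta p has_derivative blinfun_apply E) (at y) \<and> norm E \<le> M"
    proof (rule exI[of _ M], intro ballI)
      fix y assume y: "y \<in> half_ball \<delta>1"
      then have yc: "y \<in> half_cball \<delta>1" by (auto simp: half_ball_def half_cball_def)
      show "\<exists>E. (eta p has_derivative blinfun_apply E) (at y) \<and> norm E \<le> M"
        using f'(1)[of y] M[of "f' y"] yc V(2) by auto
    qed
  qed
  obtain Mf where Mf: "\<forall>p\<in>P. \<forall>y\<in>half_ball \<delta>1. \<exists>E. (eta p has_derivative blinfun_apply E) (at y) \<and> norm E \<le> Mf p"
    using finite_set_choice[OF fP ME1] by blast
  define ME where "ME = (\<Sum>p\<in>P. \<bar>Mf p\<bar>)"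
  have ME: "Mf p \<le> ME" if "p \<in> P" for p
  proof -
    have "\<bar>Mf p\<bar> \<le> ME" unfolding ME_def using fP that by (intro member_le_sum) auto
    then show ?thesis by linarith
  qed
  have ME0: "ME \<ge> 0" unfolding ME_def by (simp add: sum_nonneg)
  define Kd where "Kd = MT * ME * (3 / T0 + 1 / T0^2)"
  have Kd0: "Kd \<ge> 0" unfolding Kd_def using MT ME0 T0_pos by simp
  define C1 where "C1 = (3 * K0C T0 * LC T0) * ZC T0"
  define C2 where "C2 = ((1/g0 + 1/\<epsilon>) * K0C T0 * LC T0) * ZC T0"
  define C3 where "C3 = ((2 + 30 / T0) * K0C T0 * LC T0) * ZC T0"
  define C4 where "C4 = (2 * (Kd + 1) * K0C T0 * LC T0) * ZC T0"
  have pos: "K0C T0 \<ge> 0" "LC T0 \<ge> 0" "ZC T0 \<ge> 0" using T0_pos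
    by (auto simp: K0C_def LC_def ZC_def kC_def cC_def)
  have Cs: "C1 \<ge> 0" "C2 \<ge> 0" "C3 \<ge> 0" "C4 \<ge> 0" unfolding C1_def C2_def C3_def C4_def
    using pos g0 eps_pos T0_pos Kd0 by auto
  define C where "C = C1 + C2 + C3 + C4"
  have CC: "ennreal C1 \<le> ennreal C" "ennreal C2 \<le> ennreal C" "ennreal C3 \<le> ennreal C" "ennreal C4 \<le> ennreal C"
    unfolding C_def using Cs by (auto intro!: ennreal_leI)
  have twx: "\<bar>Tw x1 - T0\<bar> < T0/10" if "x1 \<in> frontier {x. xi x < 0}" for x1
    using Twb that d0 by fastforce
  have gx: "gxi x1 \<noteq> 0" "g0 \<le> norm (gxi x1)" if "x1 \<in> frontier {x. xi x < 0}" for x1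
    using g0 that by fastforce+
  have nx: "nrm gxi x1 \<bullet> nrm gxi x1 = 1" if "x1 \<in> frontier {x. xi x < 0}" for x1
    using nrm_unit[of gxi x1] gx(1)[OF that] by simp
  have rpq: "0 < rperp" "rperp \<le> 1" "\<bar>1 - rperp\<bar> < 1/100" "0 < rpar" "rpar < 2" "\<bar>1 - rpar\<bar> < 1/100"
    if "0 < rperp \<and> rperp \<le> 1 \<and> 0 < rpar \<and> rpar < 2 \<and> max \<bar>1 - rperp\<bar> \<bar>1 - rpar\<bar> < \<delta>0" for rperp rpar
    using that d0 by auto
  show ?thesis
    apply (rule exI[of _ C])
    apply (intro allI impI ballI conjI)
    subgoal premises prems for rperp rpar x1 v
      using int1[OF T0_pos twx[OF prems(2)] rpq[OF prems(1)] nx[OF prems(2)], of v] CC(1) unfolding C1_def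
      by (rule order_trans)
    subgoal premises prems for rperp rpar x1 v
    proof -
      note x1 = prems(2)
      define g where "g = gxi x1"
      have al: "(\<exists>gn. gn \<ge> g0 \<and> kin_alpha chi xi gxi hxi x1 v1 = gn * (nrm gxi x1 \<bullet> v1)) \<or> kin_alpha chi xi gxi hxi x1 v1 \<ge> \<epsilon>"
        if pos1: "0 < nrm gxi x1 \<bullet> v1" for v1
      proof -
        have gn: "g \<noteq> 0" "g0 \<le> norm g" using gx[OF x1] by (auto simp: g_def)
        have ka: "kin_alpha chi xi gxi hxi x1 v1 = chi (\<bar>v1 \<bullet> g\<bar>)"
          unfolding kin_alpha_def g_def using xz[OF x1] by simp
        have nv: "nrm gxi x1 \<bullet> v1 = (v1 \<bullet> g) / norm g"
          unfolding nrm_def g_def by (simp add: inner_commute)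
        have tpos: "v1 \<bullet> g > 0" using pos1 gn unfolding nv by (simp add: divide_pos_pos zero_less_divide_iff)
        show ?thesis
        proof (cases "v1 \<bullet> g \<le> \<epsilon>")
          case True
          then have "kin_alpha chi xi gxi hxi x1 v1 = v1 \<bullet> g" unfolding ka using tpos chi_id by simp
          also have "\<dots> = norm g * (nrm gxi x1 \<bullet> v1)" unfolding nv using gn by simp
          finally show ?thesis using gn by blast
        next
          case False
          then have "chi \<epsilon> \<le> chi (v1 \<bullet> g)" using chi_mono by (simp add: mono_def)
          moreover have "chi \<epsilon> = \<epsilon>" using chi_id eps_pos by simp
          ultimately show ?thesis unfolding ka using tpos by simp
        qed
      qed
      show ?thesis
        using int2[OF T0_pos twx[OF x1] rpq[OF prems(1)] nx[OF x1] g0(1) eps_pos al, of v] CC(2) unfolding C2_def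
        by (rule order_trans)
    qed
    subgoal premises prems for rperp rpar x1 v
      using int3[OF T0_pos twx[OF prems(2)] rpq[OF prems(1)] nx[OF prems(2)], of v] CC(3) unfolding C3_def
      by (rule order_trans)
    subgoal premises prems for rperp rpar x1 v p y i D
    proof -
      note x1 = prems(2)
      have yD: "y $ 3 = 0" "eta p y = x1"
        "((\<lambda>t. Acoef T0 rperp rpar (Tw (eta p (y + t *\<^sub>R axis i 1))) v) has_real_derivative D) (at 0)"
        using prems(6) by auto
      obtain E where E: "(eta p has_derivative blinfun_apply E) (at y)" "norm E \<le> Mf p"
        using Mf prems(3) prems(4) by blast
      have dT: "(Tw has_derivative blinfun_apply (Tw' x1)) (at (eta p y))"
        using U(3) U(2) x1 yD(2) by auto
      have tw0: "Tw (eta p y) \<noteq> 0" using twx[OF x1] T0_pos yD(2) by auto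
      have Deq: "D = blinfun_apply (Tw' x1) (blinfun_apply E (axis i 1)) *
         (Acoef T0 rperp rpar (Tw x1) v * ((norm v)^2 / (2 * (Tw x1)^2) - 2 / Tw x1))"
        using D_chain[OF E(1) dT tw0 yD(3)] yD(2) by simp
      have A: "0 < Acoef T0 rperp rpar (Tw x1) v"
        using pref_bound(1)[OF T0_pos twx[OF x1] rpq[OF prems(1)]] by (simp add: Acoef_def)
      have b1: "\<bar>blinfun_apply (Tw' x1) (blinfun_apply E (axis i 1))\<bar> \<le> MT * ME"
      proof -
        have "\<bar>blinfun_apply (Tw' x1) (blinfun_apply E (axis i 1))\<bar> \<le> norm (Tw' x1) * norm (blinfun_apply E (axis i 1))"
          using norm_blinfun[of "Tw' x1"] by simp
        also have "\<dots> \<le> MT * ME"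
        proof (rule mult_mono)
          show "norm (Tw' x1) \<le> MT" by (rule MT(2)[OF x1])
          have "norm (blinfun_apply E (axis i 1)) \<le> norm E * norm (axis i (1::real))" by (rule norm_blinfun)
          then show "norm (blinfun_apply E (axis i 1)) \<le> ME" using E(2) ME[OF prems(3)] by simp
        qed (use MT in auto)
        finally show ?thesis .
      qed
      have b2: "\<bar>Acoef T0 rperp rpar (Tw x1) v * ((norm v)^2 / (2 * (Tw x1)^2) - 2 / Tw x1)\<bar>
          \<le> (3 / T0 + 1 / T0^2) * Acoef T0 rperp rpar (Tw x1) v * (1 + (norm v)^2)"
        by (rule Aprime_bound[OF T0_pos twx[OF x1] A]) simp
      have "\<bar>D\<bar> \<le> (MT * ME) * ((3 / T0 + 1 / T0^2) * Acoef T0 rperp rpar (Tw x1) v * (1 + (norm v)^2))"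
        unfolding Deq abs_mult[of "blinfun_apply (Tw' x1) (blinfun_apply E (axis i 1))"]
        by (rule mult_mono[OF b1 b2]) (use MT ME0 in auto)
      then have Db: "\<bar>D\<bar> \<le> Kd * Acoef T0 rperp rpar (Tw x1) v * (1 + (norm v)^2)"
        by (simp add: Kd_def mult_ac)
      show ?thesis
        using int4[OF T0_pos twx[OF x1] rpq[OF prems(1)] nx[OF x1] Kd0 Db] CC(4) unfolding C4_def
        by (rule order_trans)
    qed
    done
qed

theorem lemma22:
  fixes xi :: "real^3 \<Rightarrow> real" and gxi :: "real^3 \<Rightarrow> real^3" and hxi :: "real^3 \<Rightarrow> real^3^3"
    and T0 :: real and \<epsilon> :: real and chi :: "real \<Rightarrow> real" and chi' :: "real \<Rightarrow> real"
  assumes xi_d1: "\<And>x. (xi has_derivative (\<lambda>h. gxi x \<bullet> h)) (at x)"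
    and xi_d2: "\<And>x. (gxi has_derivative (\<lambda>h. hxi x *v h)) (at x)"
    and xi_C2: "continuous_on UNIV hxi"
    and bdd: "bounded {x. xi x < 0}"
    and convex: "\<exists>c>0. \<forall>x \<zeta>. \<zeta> \<bullet> (hxi x *v \<zeta>) \<ge> c * (norm \<zeta>)^2"
    and grad_nz: "\<exists>U. open U \<and> frontier {x. xi x < 0} \<subseteq> U \<and> (\<forall>x\<in>U. gxi x \<noteq> 0)"
    and T0_pos: "T0 > 0"
    and eps_pos: "\<epsilon> > 0"
    and chi_smooth: "\<And>k x. ((deriv ^^ k) chi) differentiable (at x)"
    and chi_deriv: "\<And>s. (chi has_real_derivative chi' s) (at s)"
    and chi_mono: "mono chi"
    and chi_id: "\<And>s. 0 \<le> s \<Longrightarrow> s \<le> \<epsilon> \<Longrightarrow> chi s = s"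
    and chi_const: "\<And>s. 4 * \<epsilon> \<le> s \<Longrightarrow> chi s = 2 * \<epsilon>"
    and chi'_bd: "\<And>s. \<bar>chi' s\<bar> \<le> 1"
  shows "\<exists>\<delta>0>0. \<forall>(Tw :: real^3 \<Rightarrow> real) (P :: (real^3) set) (eta :: real^3 \<Rightarrow> real^3 \<Rightarrow> real^3) \<delta>1.
     ( (\<forall>x\<in>frontier {x. xi x < 0}. Tw x > 0)
     \<and> (\<exists>U. open U \<and> frontier {x. xi x < 0} \<subseteq> U \<and> C1_on U Tw)
     \<and> (\<forall>x\<in>frontier {x. xi x < 0}. \<bar>Tw x - T0\<bar> < \<delta>0)
     \<and> \<delta>1 > 0 \<and> finite P \<and> P \<subseteq> frontier {x. xi x < 0}
     \<and> (\<forall>p\<in>P. eta p 0 = p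
          \<and> (\<exists>V. open V \<and> half_cball \<delta>1 \<subseteq> V \<and> C2_on V (eta p))
          \<and> inj_on (eta p) (half_ball \<delta>1)
          \<and> eta p ` half_ball \<delta>1 \<subseteq> closure {x. xi x < 0}
          \<and> (\<forall>y\<in>half_ball \<delta>1. (eta p y \<in> frontier {x. xi x < 0} \<longleftrightarrow> y$3 = 0))
          \<and> (\<forall>y\<in>half_ball \<delta>1. y$3 = 0 \<longrightarrow>
               (\<forall>i j. i \<noteq> j \<longrightarrow>
                 frechet_derivative (eta p) (at y) (axis i 1) \<bullet> frechet_derivative (eta p) (at y) (axis j 1) = 0))))
     \<longrightarrow> (\<exists>C. \<forall>rperp rpar.
           0 < rperp \<and> rperp \<le> 1 \<and> 0 < rpar \<and> rpar < 2
           \<and> max \<bar>1 - rperp\<bar> \<bar>1 - rpar\<bar> < \<delta>0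
           \<longrightarrow> (\<forall>x1\<in>frontier {x. xi x < 0}. \<forall>v :: real^3.
                 ennreal (Acoef T0 rperp rpar (Tw x1) v) *
                   (\<integral>\<^sup>+ v1. ennreal ((1 + (norm v1)^2 + (norm v)^2)
                        * Bfun T0 rperp rpar (Tw x1) (nrm gxi x1) v v1)
                      * indicator {v1. nrm gxi x1 \<bullet> v1 > 0} v1 \<partial>lborel) \<le> ennreal C
               \<and> ennreal (Acoef T0 rperp rpar (Tw x1) v) *
                   (\<integral>\<^sup>+ v1. ennreal (Bfun T0 rperp rpar (Tw x1) (nrm gxi x1) v v1
                        / kin_alpha chi xi gxi hxi x1 v1)
                      * indicator {v1. nrm gxi x1 \<bullet> v1 > 0} v1 \<partial>lborel) \<le> ennreal C
               \<and> ennreal (Acoef T0 rperp rpar (Tw x1) v) *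
                   (\<integral>\<^sup>+ v1. ennreal ((1 + norm v1)
                        * onorm (frechet_derivative (Bfun T0 rperp rpar (Tw x1) (nrm gxi x1) v) (at v1)))
                      * indicator {v1. nrm gxi x1 \<bullet> v1 > 0} v1 \<partial>lborel) \<le> ennreal C
               \<and> (\<forall>p\<in>P. \<forall>y\<in>half_ball \<delta>1. \<forall>i\<in>{1,2}. \<forall>D.
                    y$3 = 0 \<and> eta p y = x1 \<and>
                    ((\<lambda>t. Acoef T0 rperp rpar (Tw (eta p (y + t *\<^sub>R axis i 1))) v)
                       has_real_derivative D) (at 0)
                    \<longrightarrow> ennreal \<bar>D\<bar> *
                      (\<integral>\<^sup>+ v1. ennreal (Bfun T0 rperp rpar (Tw x1) (nrm gxi x1) v v1)
                         * indicator {v1. nrm gxi x1 \<bullet> v1 > 0} v1 \<partial>lborel) \<le> ennreal C)))"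
proof -
  have xic: "continuous_on UNIV xi"
    by (intro continuous_at_imp_continuous_on ballI has_derivative_continuous[OF xi_d1])
  have gxic: "continuous_on UNIV gxi"
    by (intro continuous_at_imp_continuous_on ballI has_derivative_continuous[OF xi_d2])
  have xz: "\<And>x. x \<in> frontier {x. xi x < 0} \<Longrightarrow> xi x = 0" by (rule frontier_zero[OF xic])
  have Fc: "compact (frontier {x. xi x < 0})"
  proof -
    have "frontier {x. xi x < 0} \<subseteq> closure {x. xi x < 0}" by (simp add: frontier_def)
    then have "bounded (frontier {x. xi x < 0})" using bounded_subset[OF bounded_closure[OF bdd]] by blast
    then show ?thesis using frontier_closed by (simp add: compact_eq_bounded_closed)
  qed
  obtain U0 where U0: "open U0" "frontier {x. xi x < 0} \<subseteq> U0" "\<forall>x\<in>U0. gxi x \<noteq> 0" using grad_nz by blast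
  obtain g0 where g0: "g0 > 0" "\<And>x. x \<in> frontier {x. xi x < 0} \<Longrightarrow> g0 \<le> norm (gxi x)"
  proof (cases "frontier {x. xi x < 0} = {}")
    case True then show ?thesis using that[of 1] by auto
  next
    case False
    have "continuous_on (frontier {x. xi x < 0}) (\<lambda>x. norm (gxi x))"
      by (intro continuous_on_norm continuous_on_subset[OF gxic]) auto
    from continuous_attains_inf[OF Fc False this] obtain x0 where
      x0: "x0 \<in> frontier {x. xi x < 0}" "\<And>y. y \<in> frontier {x. xi x < 0} \<Longrightarrow> norm (gxi x0) \<le> norm (gxi y)" by blast
    have "gxi x0 \<noteq> 0" using U0 x0(1) by blast
    then show ?thesis using that[of "norm (gxi x0)"] x0(2) by auto
  qed
  define d0 where "d0 = min (1/100) (T0/10)"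
  show ?thesis
    apply (rule exI[of _ d0])
    apply (intro conjI allI impI)
    subgoal using T0_pos by (simp add: d0_def)
    subgoal premises H for Tw P eta \<delta>1
      using H by (intro main_inner[OF T0_pos eps_pos chi_mono chi_id xz g0(1) g0(2) Fc]) (auto simp: d0_def)
    done
qed


end
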